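(* Under the hypotheses of the setting below (with $\tilde G$ obtained from $G$ by the update procedure), define the trisection $O=\{i\in E:\sum_{i'\in E}\tilde G_{ii'}>|E|/2\}$, $I=\{i\in E:\sum_{i'\in E}\tilde G_{i'i}>|E|/2\}$, $P=E\setminus(O\cup I)$, and let $\bar i\in E$ be the median of $E$ w.r.t. $\pi$, i.e. $|\{i'\in E:\pi(i')\le\pi(\bar i)\}|=\lceil|E|/2\rceil$. Then with probability at least $1-\frac{|Q|\delta}{12\lceil\log_2(n\vee d)\rceil d}$, \[ \pi(i_O)<\pi(\bar i)<\pi(i_I)\qquad\text{for all } i_O\in O,\ i_I\in I . \]
   Context: Setting: $\pi\in\mathcal S_n$, $\eta\in\mathcal S_d$, $M\in[0,1]^{n\times d}$ with $(M_{\pi^{-1}(i)\eta^{-1}(j)})_{ij}$ non-increasing along rows and columns; $p\in[0,1]$, $h\in(0,1]$, $\sigma>0$, $\delta\in(0,1)$. $\tilde Y^{(a)},\tilde Y^{(b)}$ are independent, each generated as: $N_{ij}$ i.i.d. $\mathrm{Poisson}(\mu)$, independent $\tilde Y_{i,j,k}=M_{ij}+W_{ijk}$ with $W_{ijk}$ independent centered $\sigma^2$-subGaussian ($\mathbb{E}e^{tW}\le e^{t^2\sigma^2/2}$), $\tilde Y_{ij}=\frac1{N_{ij}}\sum_{k\le N_{ij}}\tilde Y_{i,j,k}$ ($0/0=0$); $\lambda_1=1-e^{-\mu}$. $L=\log\big(24\,nd\,(n\vee d)^{1/2}\lceil\log_2(n\vee d)\rceil/\delta\big)$, $\rho=(1\vee\sigma)e\sqrt{8L}$,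 $\gamma=2L/(\lambda_1e^2)$. $E\subseteq[n]$, $Q\subseteq[d]$, $G\in\{0,1\}^{n\times n}$ satisfy: $Q^*(E):=\{j:\max_{i\in E}M_{ij}\ge p+h,\ \min_{i\in E}M_{ij}\le p-h\}\subseteq Q$; $\lambda_1(|E|\wedge|Q|)\ge4\rho^2/h^2$; $G_{ii'}=1\Rightarrow\pi(i)<\pi(i')$ for $i,i'\in E$. Update procedure: $\bar y(j)=\frac1{|E|}\sum_{i\in E}\tilde Y^{(a)}_{ij}$, $\tau=2\rho\sqrt{\lambda_1/|E|}$; for $j\in Q$, $c\in\{2,\dots,\lceil\sqrt{\lambda_1|E|}/(2\rho)+1\rceil\}$: $A_j=\{j'\in Q:|\bar y(j')-\bar y(j)|\le\tau\}$, $Q^l_j(c)=\{j'\in Q:\tau<\bar y(j')-\bar y(j)\le c\tau\}$, $Q^r_j(c)=\{j'\in Q:\tau<\bar y(j)-\bar y(j')\le c\tau\}$; $\mathcal Q$ = all these sets together with $Q$, keeping only those of size $\ge\gamma$. Starting from $\tilde G=G$, for every $Q'\in\mathcal Q$ and $i,i'\in E$, set $\tilde G_{ii'}=1$ if $\frac1{|Q'|}\sum_{j\in Q'}(\tilde Y^{(b)}_{ij}-\tilde Y^{(b)}_{i'j})>2\rho\sqrt{\lambda_1/|Q'|}$. *)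

theory Defs
  imports "HOL-Probability.Probability"
begin

text \<open>For each copy c (True = (a), False = (b)), row i, column j:
  the count N c i j and the noise variables W c i j k (k = 0,1,2,...; only k < N c i j
  are used).\<close>

definition obs :: "(nat \<Rightarrow> nat \<Rightarrow> real) \<Rightarrow> nat \<Rightarrow> (nat \<Rightarrow> real) \<Rightarrow> nat \<Rightarrow> nat \<Rightarrow> real" where
  "obs M N W i j = (if N = 0 then 0 else (1 / real N) * (\<Sum>k<N. M i j + W k))"

definition lam1 :: "real \<Rightarrow> real" where
  "lam1 \<mu> = 1 - exp (- \<mu>)"

definition Lconst :: "nat \<Rightarrow> nat \<Rightarrow> real \<Rightarrow> real" where
  "Lconst n d \<delta> = ln (24 * real n * real d * sqrt (real (max n d))
       * real_of_int \<lceil>log 2 (real (max n d))\<rceil> / \<delta>)"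

definition rho :: "real \<Rightarrow> real \<Rightarrow> real" where
  "rho \<sigma> L = max 1 \<sigma> * exp 1 * sqrt (8 * L)"

definition gam :: "real \<Rightarrow> real \<Rightarrow> real" where
  "gam L l1 = 2 * L / (l1 * (exp 1)\<^sup>2)"

definition Qstar :: "(nat \<Rightarrow> nat \<Rightarrow> real) \<Rightarrow> nat \<Rightarrow> real \<Rightarrow> real \<Rightarrow> nat set \<Rightarrow> nat set" where
  "Qstar M d p h E = {j. j < d \<and> Max ((\<lambda>i. M i j) ` E) \<ge> p + h \<and> Min ((\<lambda>i. M i j) ` E) \<le> p - h}"

definition ybar :: "(nat \<Rightarrow> nat \<Rightarrow> real) \<Rightarrow> nat set \<Rightarrow> nat \<Rightarrow> real" where
  "ybar ya E j = (1 / real (card E)) * (\<Sum>i\<in>E. ya i j)"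

definition tau :: "real \<Rightarrow> real \<Rightarrow> nat set \<Rightarrow> real" where
  "tau \<rho> l1 E = 2 * \<rho> * sqrt (l1 / real (card E))"

definition cmax :: "real \<Rightarrow> real \<Rightarrow> nat set \<Rightarrow> int" where
  "cmax \<rho> l1 E = \<lceil>sqrt (l1 * real (card E)) / (2 * \<rho>) + 1\<rceil>"

definition Aset :: "(nat \<Rightarrow> nat \<Rightarrow> real) \<Rightarrow> real \<Rightarrow> real \<Rightarrow> nat set \<Rightarrow> nat set \<Rightarrow> nat \<Rightarrow> nat set" where
  "Aset ya \<rho> l1 E Q j = {j'\<in>Q. \<bar>ybar ya E j' - ybar ya E j\<bar> \<le> tau \<rho> l1 E}"

definition Qleft :: "(nat \<Rightarrow> nat \<Rightarrow> real) \<Rightarrow> real \<Rightarrow> real \<Rightarrow> nat set \<Rightarrow> nat set \<Rightarrow> nat \<Rightarrow> int \<Rightarrow> nat set" where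
  "Qleft ya \<rho> l1 E Q j c = {j'\<in>Q. tau \<rho> l1 E < ybar ya E j' - ybar ya E j
       \<and> ybar ya E j' - ybar ya E j \<le> real_of_int c * tau \<rho> l1 E}"

definition Qright :: "(nat \<Rightarrow> nat \<Rightarrow> real) \<Rightarrow> real \<Rightarrow> real \<Rightarrow> nat set \<Rightarrow> nat set \<Rightarrow> nat \<Rightarrow> int \<Rightarrow> nat set" where
  "Qright ya \<rho> l1 E Q j c = {j'\<in>Q. tau \<rho> l1 E < ybar ya E j - ybar ya E j'
       \<and> ybar ya E j - ybar ya E j' \<le> real_of_int c * tau \<rho> l1 E}"

definition Qfam :: "(nat \<Rightarrow> nat \<Rightarrow> real) \<Rightarrow> real \<Rightarrow> real \<Rightarrow> real \<Rightarrow> nat set \<Rightarrow> nat set \<Rightarrow> nat set set" where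
  "Qfam ya \<rho> l1 \<gamma> E Q =
     {Q' \<in> {Q} \<union> (Aset ya \<rho> l1 E Q ` Q)
             \<union> {Qleft ya \<rho> l1 E Q j c | j c. j \<in> Q \<and> c \<in> {2..cmax \<rho> l1 E}}
             \<union> {Qright ya \<rho> l1 E Q j c | j c. j \<in> Q \<and> c \<in> {2..cmax \<rho> l1 E}}.
      real (card Q') \<ge> \<gamma>}"

definition Gupd :: "(nat \<Rightarrow> nat \<Rightarrow> real) \<Rightarrow> (nat \<Rightarrow> nat \<Rightarrow> real) \<Rightarrow> real \<Rightarrow> real \<Rightarrow> real
    \<Rightarrow> nat set \<Rightarrow> nat set \<Rightarrow> (nat \<Rightarrow> nat \<Rightarrow> bool) \<Rightarrow> nat \<Rightarrow> nat \<Rightarrow> bool" where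
  "Gupd ya yb \<rho> l1 \<gamma> E Q G i i' =
     (G i i' \<or> (i \<in> E \<and> i' \<in> E \<and> (\<exists>Q' \<in> Qfam ya \<rho> l1 \<gamma> E Q.
         (1 / real (card Q')) * (\<Sum>j\<in>Q'. yb i j - yb i' j) > 2 * \<rho> * sqrt (l1 / real (card Q')))))"

definition Oset :: "(nat \<Rightarrow> nat \<Rightarrow> bool) \<Rightarrow> nat set \<Rightarrow> nat set" where
  "Oset Gt E = {i\<in>E. real (card {i'\<in>E. Gt i i'}) > real (card E) / 2}"

definition Iset :: "(nat \<Rightarrow> nat \<Rightarrow> bool) \<Rightarrow> nat set \<Rightarrow> nat set" where
  "Iset Gt E = {i\<in>E. real (card {i'\<in>E. Gt i' i}) > real (card E) / 2}"

definition subGaussian :: "'a measure \<Rightarrow> real \<Rightarrow> ('a \<Rightarrow> real) \<Rightarrow> bool" where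
  "subGaussian P \<sigma> X \<longleftrightarrow> integrable P X \<and> (\<integral>\<omega>. X \<omega> \<partial>P) = 0 \<and>
     (\<forall>t::real. integrable P (\<lambda>\<omega>. exp (t * X \<omega>)) \<and>
        (\<integral>\<omega>. exp (t * X \<omega>) \<partial>P) \<le> exp (t\<^sup>2 * \<sigma>\<^sup>2 / 2))"

end

theory Submission
  imports Defs
begin



lemma exp_neg_le: fixes z::real assumes "0 \<le> z" shows "exp (-z) \<le> 1 - z + z^2"
proof -
  have a: "1 + z \<le> exp z" by (rule exp_ge_add_one_self)
  have "(1+z) * (1 - z + z^2) = 1 + z^3" by (simp add: algebra_simps power2_eq_square power3_eq_cube)
  hence b: "1 \<le> (1+z) * (1 - z + z^2)" using assms by simp
  have c: "0 \<le> 1 - z + z^2" using b assms by (smt (verit) mult_nonneg_nonpos)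
  have "(1+z) * (1 - z + z^2) \<le> exp z * (1 - z + z^2)" by (rule mult_right_mono[OF a c])
  hence "1 \<le> exp z * (1 - z + z^2)" using b by linarith
  thus ?thesis by (simp add: exp_minus field_simps)
qed

lemma per_j_bound:
  fixes x s \<sigma> m a b :: real
  assumes x: "0 < x" "x \<le> 1" and m: "m = max 1 \<sigma>" and sig: "0 < \<sigma>" and s: "s = x / m"
    and ab: "0 \<le> a" "a \<le> b" "b \<le> 1"
  shows "exp (s^2 * \<sigma>^2 / 2) * (exp (s * a) + exp (- (s * b))) \<le> 2 + 6 * x^2"
proof -
  have m1: "1 \<le> m" "\<sigma> \<le> m" using m by auto
  have mpos: "0 < m" using m1 by simp
  have s0: "0 \<le> s" using s x mpos by simp
  have xs: "x = s * m" using s mpos by simp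
  have sx: "s \<le> x" unfolding xs using mult_left_mono[of 1 m s] s0 m1 by simp
  have ssig: "s * \<sigma> \<le> x" unfolding xs using s0 m1 by (simp add: mult_left_mono)
  have sa0: "0 \<le> s * a" using s0 ab by simp
  have sa1: "s * a \<le> x" using sx s0 ab by (metis mult_left_le order_trans)
  have "exp (- (s*b)) \<le> exp (- (s*a))" using s0 ab by (simp add: mult_left_mono)
  also have "\<dots> \<le> 1 - s*a + (s*a)^2" by (rule exp_neg_le) (use sa0 in auto)
  finally have e1: "exp (- (s*b)) \<le> 1 - s*a + (s*a)^2" .
  have e2: "exp (s*a) \<le> 1 + s*a + (s*a)^2" using sa0 sa1 x by (intro exp_bound) auto
  have sq: "(s*a)^2 \<le> x^2" using sa0 sa1 by (intro power_mono) auto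
  have sum: "exp (s * a) + exp (- (s * b)) \<le> 2 + 2*x^2" using e1 e2 sq by linarith
  define q where "q = s^2 * \<sigma>^2 / 2"
  have q0: "0 \<le> q" unfolding q_def by simp
  have "(s*\<sigma>)^2 \<le> x^2" using ssig s0 sig by (intro power_mono) auto
  hence qx: "q \<le> x^2/2" unfolding q_def by (simp add: power_mult_distrib)
  have x2: "x^2 \<le> 1" using x by (simp add: power_le_one)
  have q1: "q \<le> 1" using qx x2 by simp
  have "exp q \<le> 1 + q + q^2" using q0 q1 by (intro exp_bound) auto
  moreover have "q^2 \<le> q" using q0 q1 by (simp add: power2_eq_square mult_left_le)
  ultimately have eq: "exp q \<le> 1 + x^2" using qx by linarith
  have "exp q * (exp (s * a) + exp (- (s * b))) \<le> (1 + x^2) * (2 + 2*x^2)"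
    by (rule mult_mono[OF eq sum]) auto
  also have "\<dots> = 2 + 4*x^2 + 2*x^2*x^2" by (simp add: algebra_simps)
  also have "2*x^2*x^2 \<le> 2*x^2" using x2 by (simp add: mult_left_le)
  finally show ?thesis unfolding q_def by linarith
qed



lemma e_ge_25: "(2.5::real) \<le> exp 1"
proof -
  have "(1 + 1 / real 8) ^ 8 \<le> exp 1" by (rule exp_ge_one_plus_x_over_n_power_n) auto
  moreover have "(2.5::real) \<le> (1 + 1 / real 8) ^ 8" by (simp add: power_def)
  ultimately show ?thesis by linarith
qed

lemma sqrt8: "(2.8::real) \<le> sqrt 8"
  by (rule real_le_rsqrt) (simp add: power2_eq_square)

lemma exponent_bound:
  fixes L u m :: real
  assumes L: "0 < L" and u: "2 * L / (exp 1)^2 \<le> u" and m: "1 \<le> m"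
  defines "x \<equiv> (if L \<le> u then sqrt (L / u) else 1)"
  shows "0 < x" "x \<le> 1"
    "- ((x / m) * (2 * (m * exp 1 * sqrt (8 * L)) * sqrt u)) + 6 * x^2 * u \<le> - 3 * L"
proof -
  have e1: "2.5 \<le> exp (1::real)" by (rule e_ge_25)
  have e2: "exp (1::real) < 2.72" using e_less_272 by simp
  have ee: "(exp 1)^2 \<le> (7.4::real)"
  proof -
    have "(exp 1)^2 \<le> (2.72::real)^2" using e2 by (intro power_mono) auto
    thus ?thesis by (simp add: power2_eq_square)
  qed
  have up: "0 < u"
  proof -
    have "0 < 2 * L / (exp 1)^2" using L by simp
    thus ?thesis using u by linarith
  qed
  have uL: "2 * L / 7.4 \<le> u"
  proof -
    have "2 * L / 7.4 \<le> 2 * L / (exp 1)^2" using L ee by (intro divide_left_mono) auto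
    thus ?thesis using u by linarith
  qed
  have K: "2 * exp 1 * sqrt 8 \<ge> (14::real)"
  proof -
    have "2 * 2.5 * 2.8 \<le> 2 * exp 1 * sqrt (8::real)"
      using e1 sqrt8 by (intro mult_mono) auto
    thus ?thesis by simp
  qed
  have sq: "sqrt (8 * L) * sqrt u = sqrt 8 * (sqrt L * sqrt u)" by (simp add: real_sqrt_mult)
  have rw: "(x / m) * (2 * (m * exp 1 * sqrt (8 * L)) * sqrt u) = (2 * exp 1 * sqrt 8) * x * (sqrt L * sqrt u)"
    using m sq by (simp add: field_simps)
  show "0 < x" unfolding x_def using L up by auto
  show "x \<le> 1" unfolding x_def using L up by auto
  show "- ((x / m) * (2 * (m * exp 1 * sqrt (8 * L)) * sqrt u)) + 6 * x^2 * u \<le> - 3 * L"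
  proof (cases "L \<le> u")
    case True
    hence xd: "x = sqrt (L/u)" unfolding x_def by simp
    have x2: "x^2 * u = L" using xd L up by simp
    have xl: "x * (sqrt L * sqrt u) = L" using xd L up
      by (simp add: real_sqrt_divide)
    have "(2 * exp 1 * sqrt 8) * x * (sqrt L * sqrt u) = (2 * exp 1 * sqrt 8) * L"
      using xl by (simp add: mult.assoc)
    moreover have "14 * L \<le> (2 * exp 1 * sqrt 8) * L" using K L by (intro mult_right_mono) auto
    ultimately have "(2 * exp 1 * sqrt 8) * x * (sqrt L * sqrt u) \<ge> 14 * L" by linarith
    hence "- ((2 * exp 1 * sqrt 8) * x * (sqrt L * sqrt u)) + 6 * (x^2 * u) \<le> - 3 * L"
      unfolding x2 using L by linarith
    thus ?thesis unfolding rw by (simp add: mult.assoc)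
  next
    case False
    hence x1: "x = 1" unfolding x_def by simp
    have Lu: "u \<le> sqrt L * sqrt u"
    proof -
      have "sqrt u * sqrt u \<le> sqrt L * sqrt u" using False up by (intro mult_right_mono) auto
      thus ?thesis using up by simp
    qed
    have pos: "0 \<le> sqrt L * sqrt u" using L up by simp
    have "14 * (sqrt L * sqrt u) \<le> (2 * exp 1 * sqrt 8) * (sqrt L * sqrt u)"
      using K pos by (intro mult_right_mono) auto
    moreover have "3 * L \<le> 8 * (sqrt L * sqrt u)"
    proof -
      have "(8 * (sqrt L * sqrt u))^2 = 64 * (L * u)"
        using L up by (simp add: power_mult_distrib)
      moreover have "9 * (L * L) \<le> 64 * (L * u)" using L uL by (simp add: field_simps)
      ultimately have h3: "(3 * L)^2 \<le> (8 * (sqrt L * sqrt u))^2"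
        by (simp add: power2_eq_square)
      have pos8: "0 \<le> 8 * (sqrt L * sqrt u)" using pos by simp
      show ?thesis by (rule power2_le_imp_le[OF h3 pos8])
    qed
    moreover have "(2 * exp 1 * sqrt 8) * x * (sqrt L * sqrt u) = (2 * exp 1 * sqrt 8) * (sqrt L * sqrt u)"
      using x1 by simp
    moreover have "6 * x^2 * u = 6 * u" using x1 by simp
    ultimately have "- ((2 * exp 1 * sqrt 8) * x * (sqrt L * sqrt u)) + 6 * x^2 * u \<le> - 3 * L"
      using Lu by linarith
    thus ?thesis unfolding rw .
  qed
qed



lemma Qfam_iff: "S \<in> Qfam y \<rho> l1 \<gamma> E Q \<longleftrightarrow> \<gamma> \<le> real (card S) \<and>
   (S = Q \<or> (\<exists>j\<in>Q. S = Aset y \<rho> l1 E Q j) \<or>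
    (\<exists>j\<in>Q. \<exists>c\<in>{2..cmax \<rho> l1 E}. S = Qleft y \<rho> l1 E Q j c) \<or>
    (\<exists>j\<in>Q. \<exists>c\<in>{2..cmax \<rho> l1 E}. S = Qright y \<rho> l1 E Q j c))"
  unfolding Qfam_def by blast

lemma Qfam_sub: "S \<in> Qfam y \<rho> l1 \<gamma> E Q \<Longrightarrow> S \<subseteq> Q"
  unfolding Qfam_iff Aset_def Qleft_def Qright_def by auto

lemma ybar_cong: "(\<And>i. i \<in> E \<Longrightarrow> y i j = y' i j) \<Longrightarrow> ybar y E j = ybar y' E j"
  unfolding ybar_def by simp

lemma Qfam_cong:
  assumes "\<And>i j. i \<in> E \<Longrightarrow> j \<in> Q \<Longrightarrow> y i j = y' i j"
  shows "Qfam y \<rho> l1 \<gamma> E Q = Qfam y' \<rho> l1 \<gamma> E Q"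
proof -
  have yb: "\<And>j. j \<in> Q \<Longrightarrow> ybar y E j = ybar y' E j" using assms by (intro ybar_cong) auto
  have A: "\<And>j. j \<in> Q \<Longrightarrow> Aset y \<rho> l1 E Q j = Aset y' \<rho> l1 E Q j"
    unfolding Aset_def using yb by auto
  have L: "\<And>j c. j \<in> Q \<Longrightarrow> Qleft y \<rho> l1 E Q j c = Qleft y' \<rho> l1 E Q j c"
    unfolding Qleft_def using yb by auto
  have R: "\<And>j c. j \<in> Q \<Longrightarrow> Qright y \<rho> l1 E Q j c = Qright y' \<rho> l1 E Q j c"
    unfolding Qright_def using yb by auto
  show ?thesis
  proof (rule set_eqI)
    fix S show "S \<in> Qfam y \<rho> l1 \<gamma> E Q \<longleftrightarrow> S \<in> Qfam y' \<rho> l1 \<gamma> E Q"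
      unfolding Qfam_iff by (auto simp: A L R)
  qed
qed

lemma set_eq_filter: "S = {j'\<in>Q. P j'} \<longleftrightarrow> S \<subseteq> Q \<and> (\<forall>j'\<in>Q. (j' \<in> S) = P j')"
  by auto

lemma Qfam_pred:
  fixes y :: "'b \<Rightarrow> nat \<Rightarrow> nat \<Rightarrow> real"
  assumes fin: "finite E" "finite Q"
    and ym: "\<And>i j. (\<lambda>x. y x i j) \<in> borel_measurable Mx"
  shows "{x \<in> space Mx. S \<in> Qfam (y x) \<rho> l1 \<gamma> E Q} \<in> sets Mx"
proof -
  have yb[measurable]: "\<And>j. (\<lambda>x. ybar (y x) E j) \<in> borel_measurable Mx"
    unfolding ybar_def using ym by measurable
  have fc: "finite {2..cmax \<rho> l1 E}" by simp
  have eq: "{x \<in> space Mx. S \<in> Qfam (y x) \<rho> l1 \<gamma> E Q} = {x \<in> space Mx. \<gamma> \<le> real (card S) \<and>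
   (S = Q \<or> (\<exists>j\<in>Q. S \<subseteq> Q \<and> (\<forall>j'\<in>Q. (j' \<in> S) = (\<bar>ybar (y x) E j' - ybar (y x) E j\<bar> \<le> tau \<rho> l1 E))) \<or>
    (\<exists>j\<in>Q. \<exists>c\<in>{2..cmax \<rho> l1 E}. S \<subseteq> Q \<and> (\<forall>j'\<in>Q. (j' \<in> S) = (tau \<rho> l1 E < ybar (y x) E j' - ybar (y x) E j
       \<and> ybar (y x) E j' - ybar (y x) E j \<le> real_of_int c * tau \<rho> l1 E))) \<or>
    (\<exists>j\<in>Q. \<exists>c\<in>{2..cmax \<rho> l1 E}. S \<subseteq> Q \<and> (\<forall>j'\<in>Q. (j' \<in> S) = (tau \<rho> l1 E < ybar (y x) E j - ybar (y x) E j'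
       \<and> ybar (y x) E j - ybar (y x) E j' \<le> real_of_int c * tau \<rho> l1 E))))}"
    unfolding Qfam_iff Aset_def Qleft_def Qright_def set_eq_filter by blast
  show ?thesis unfolding eq using fin fc by measurable
qed


lemma Qfam_card:
  assumes "finite Q"
  shows "card (Qfam y \<rho> l1 \<gamma> E Q) \<le> 1 + card Q + 2 * (card Q * nat (cmax \<rho> l1 E - 1))"
proof -
  define CI where "CI = {2..cmax \<rho> l1 E}"
  have cCI: "card CI = nat (cmax \<rho> l1 E - 1)" unfolding CI_def by simp
  have sub: "Qfam y \<rho> l1 \<gamma> E Q \<subseteq> {Q} \<union> Aset y \<rho> l1 E Q ` Q \<union>
     (\<lambda>(j, c). Qleft y \<rho> l1 E Q j c) ` (Q \<times> CI) \<union> (\<lambda>(j, c). Qright y \<rho> l1 E Q j c) ` (Q \<times> CI)"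
    unfolding Qfam_def CI_def by auto
  have fCI: "finite CI" unfolding CI_def by simp
  have "card (Qfam y \<rho> l1 \<gamma> E Q) \<le> card ({Q} \<union> Aset y \<rho> l1 E Q ` Q \<union>
     (\<lambda>(j, c). Qleft y \<rho> l1 E Q j c) ` (Q \<times> CI) \<union> (\<lambda>(j, c). Qright y \<rho> l1 E Q j c) ` (Q \<times> CI))"
    using assms fCI by (intro card_mono sub) auto
  also have "\<dots> \<le> card ({Q} \<union> Aset y \<rho> l1 E Q ` Q \<union> (\<lambda>(j, c). Qleft y \<rho> l1 E Q j c) ` (Q \<times> CI))
        + card ((\<lambda>(j, c). Qright y \<rho> l1 E Q j c) ` (Q \<times> CI))" by (rule card_Un_le)
  also have "card ({Q} \<union> Aset y \<rho> l1 E Q ` Q \<union> (\<lambda>(j, c). Qleft y \<rho> l1 E Q j c) ` (Q \<times> CI))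
      \<le> card ({Q} \<union> Aset y \<rho> l1 E Q ` Q) + card ((\<lambda>(j, c). Qleft y \<rho> l1 E Q j c) ` (Q \<times> CI))" by (rule card_Un_le)
  also have "card ({Q} \<union> Aset y \<rho> l1 E Q ` Q) \<le> card {Q} + card (Aset y \<rho> l1 E Q ` Q)" by (rule card_Un_le)
  also have "card (Aset y \<rho> l1 E Q ` Q) \<le> card Q" by (rule card_image_le[OF assms])
  also have "card ((\<lambda>(j, c). Qleft y \<rho> l1 E Q j c) ` (Q \<times> CI)) \<le> card (Q \<times> CI)"
    using assms fCI by (intro card_image_le) auto
  also have "card ((\<lambda>(j, c). Qright y \<rho> l1 E Q j c) ` (Q \<times> CI)) \<le> card (Q \<times> CI)"
    using assms fCI by (intro card_image_le) auto
  finally show ?thesis using cCI by (simp add: card_cartesian_product)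
qed

lemma det_good:
  fixes \<pi> :: "nat \<Rightarrow> nat" and Gt :: "nat \<Rightarrow> nat \<Rightarrow> bool"
  assumes fin: "finite E" and ib: "ibar \<in> E"
    and med: "card {i'\<in>E. \<pi> i' \<le> \<pi> ibar} = nat \<lceil>real (card E) / 2\<rceil>"
    and cons: "\<forall>i\<in>E. \<forall>i'\<in>E. Gt i i' \<longrightarrow> \<pi> i < \<pi> i'"
  shows "(\<forall>iO\<in>Oset Gt E. \<pi> iO < \<pi> ibar) \<and> (\<forall>iI\<in>Iset Gt E. \<pi> ibar < \<pi> iI)"
proof -
  define Lo where "Lo = {i'\<in>E. \<pi> i' \<le> \<pi> ibar}"
  define x where "x = real (card E) / 2"
  have x0: "0 \<le> x" unfolding x_def by simp
  have c0: "0 \<le> \<lceil>x\<rceil>" using x0 by simp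
  have rc: "real (nat \<lceil>x\<rceil>) = real_of_int \<lceil>x\<rceil>" using c0 by simp
  have cc: "real_of_int \<lceil>x\<rceil> - 1 < x \<and> x \<le> real_of_int \<lceil>x\<rceil>" by (rule ceiling_correct)
  have cLo: "real (card Lo) \<ge> real (card E) / 2" unfolding Lo_def med
    using rc cc unfolding x_def by linarith
  have cLo2: "real (card Lo) < real (card E) / 2 + 1" unfolding Lo_def med
    using rc cc unfolding x_def by linarith
  have finLo: "finite Lo" using fin unfolding Lo_def by simp
  have LoE: "Lo \<subseteq> E" unfolding Lo_def by auto
  show ?thesis
  proof safe
    fix iO assume iO: "iO \<in> Oset Gt E"
    hence iOE: "iO \<in> E" and big: "real (card {i'\<in>E. Gt iO i'}) > real (card E) / 2"
      unfolding Oset_def by auto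
    show "\<pi> iO < \<pi> ibar"
    proof (rule ccontr)
      assume "\<not> \<pi> iO < \<pi> ibar"
      hence "{i'\<in>E. Gt iO i'} \<subseteq> E - Lo" using cons iOE unfolding Lo_def by fastforce
      hence "card {i'\<in>E. Gt iO i'} \<le> card (E - Lo)" using fin by (intro card_mono) auto
      also have "card (E - Lo) = card E - card Lo" using finLo LoE by (rule card_Diff_subset)
      finally have "real (card {i'\<in>E. Gt iO i'}) \<le> real (card E) - real (card Lo)"
        using card_mono[OF fin LoE] by linarith
      thus False using big cLo by linarith
    qed
  next
    fix iI assume iI: "iI \<in> Iset Gt E"
    hence iIE: "iI \<in> E" and big: "real (card {i'\<in>E. Gt i' iI}) > real (card E) / 2"
      unfolding Iset_def by auto
    show "\<pi> ibar < \<pi> iI"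
    proof (rule ccontr)
      assume "\<not> \<pi> ibar < \<pi> iI"
      hence "{i'\<in>E. Gt i' iI} \<subseteq> Lo - {ibar}" using cons iIE unfolding Lo_def by fastforce
      hence "card {i'\<in>E. Gt i' iI} \<le> card (Lo - {ibar})" using finLo by (intro card_mono) auto
      also have "card (Lo - {ibar}) = card Lo - 1" using ib unfolding Lo_def by simp
      finally have le1: "card {i'\<in>E. Gt i' iI} \<le> card Lo - 1" .
      have ibLo: "ibar \<in> Lo" using ib by (simp add: Lo_def)
      have "0 < card Lo" using finLo ibLo card_gt_0_iff by blast
      hence "real (card {i'\<in>E. Gt i' iI}) \<le> real (card Lo) - 1" using le1 by linarith
      thus False using big cLo2 by linarith
    qed
  qed
qed



type_synonym ix = "(bool \<times> nat \<times> nat) + (bool \<times> nat \<times> nat \<times> nat)"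

definition Xv :: "(bool \<Rightarrow> nat \<Rightarrow> nat \<Rightarrow> 'a \<Rightarrow> nat) \<Rightarrow> (bool \<Rightarrow> nat \<Rightarrow> nat \<Rightarrow> nat \<Rightarrow> 'a \<Rightarrow> real) \<Rightarrow> ix \<Rightarrow> 'a \<Rightarrow> real" where
  "Xv N W = (\<lambda>x. case x of Inl (c, i, j) \<Rightarrow> (\<lambda>\<omega>. real (N c i j \<omega>))
                     | Inr (c, i, j, k) \<Rightarrow> W c i j k)"

definition Idx :: "nat \<Rightarrow> nat \<Rightarrow> ix set" where
  "Idx n d = ({Inl (c, i, j) | c i j. i < n \<and> j < d} \<union> {Inr (c, i, j, k) | c i j k. i < n \<and> j < d})"

definition blk :: "bool \<Rightarrow> nat \<Rightarrow> nat \<Rightarrow> ix set" where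
  "blk c i j = insert (Inl (c, i, j)) (range (\<lambda>k. Inr (c, i, j, k)))"

definition tagT :: "nat \<Rightarrow> nat \<Rightarrow> ix set" where
  "tagT n d = {x \<in> Idx n d. case x of Inl (c, _, _) \<Rightarrow> c | Inr (c, _, _, _) \<Rightarrow> c}"

definition obsv :: "(nat \<Rightarrow> nat \<Rightarrow> real) \<Rightarrow> bool \<Rightarrow> nat \<Rightarrow> nat \<Rightarrow> (ix \<Rightarrow> real) \<Rightarrow> real" where
  "obsv M c i j v = obs M (nat \<lfloor>v (Inl (c, i, j))\<rfloor>) (\<lambda>k. v (Inr (c, i, j, k))) i j"

lemma blk_sub_Idx: "i < n \<Longrightarrow> j < d \<Longrightarrow> blk c i j \<subseteq> Idx n d"
  unfolding blk_def Idx_def by auto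

lemma blk_sub_tagT: "i < n \<Longrightarrow> j < d \<Longrightarrow> blk True i j \<subseteq> tagT n d"
  unfolding blk_def tagT_def Idx_def by auto

lemma obs_measurable:
  fixes f :: "'b \<Rightarrow> nat"
  assumes f: "f \<in> measurable Mx (count_space UNIV)" and w: "\<And>k. w k \<in> borel_measurable Mx"
  shows "(\<lambda>x. obs M (f x) (\<lambda>k. w k x) i j) \<in> borel_measurable Mx"
proof (rule measurable_compose_countable[where f="\<lambda>m x. obs M m (\<lambda>k. w k x) i j", OF _ f])
  fix m :: nat
  show "(\<lambda>x. obs M m (\<lambda>k. w k x) i j) \<in> borel_measurable Mx"
    unfolding obs_def using w by measurable
qed

lemma obsv_measurable:
  assumes "blk c i j \<subseteq> K"
  shows "obsv M c i j \<in> borel_measurable (PiM K (\<lambda>_. borel))"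
proof -
  have inl: "Inl (c, i, j) \<in> K" and inr: "\<And>k. Inr (c, i, j, k) \<in> K" using assms unfolding blk_def by auto
  have f: "(\<lambda>v::ix \<Rightarrow> real. nat \<lfloor>v (Inl (c, i, j))\<rfloor>) \<in> measurable (PiM K (\<lambda>_. borel)) (count_space UNIV)"
  proof -
    have "(\<lambda>v. v (Inl (c, i, j))) \<in> borel_measurable (PiM K (\<lambda>_. borel :: real measure))"
      using inl by (rule measurable_component_singleton)
    hence "(\<lambda>v. \<lfloor>(v (Inl (c, i, j)) :: real)\<rfloor>) \<in> measurable (PiM K (\<lambda>_. borel)) (count_space UNIV)"
      by measurable
    from measurable_compose[OF this measurable_count_space, of nat] show ?thesis by simp
  qed
  have w: "\<And>k. (\<lambda>v. v (Inr (c, i, j, k))) \<in> borel_measurable (PiM K (\<lambda>_. borel :: real measure))"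
    using inr by (rule measurable_component_singleton)
  show ?thesis unfolding obsv_def[abs_def] by (rule obs_measurable[OF f w])
qed

lemma obsv_restrict:
  assumes "blk c i j \<subseteq> K"
  shows "obsv M c i j (restrict (\<lambda>x. Xv N W x \<omega>) K) = obs M (N c i j \<omega>) (\<lambda>k. W c i j k \<omega>) i j"
proof -
  have inl: "Inl (c, i, j) \<in> K" and inr: "\<And>k. Inr (c, i, j, k) \<in> K" using assms unfolding blk_def by auto
  show ?thesis unfolding obsv_def using inl inr by (simp add: Xv_def)
qed


definition Yo :: "(nat \<Rightarrow> nat \<Rightarrow> real) \<Rightarrow> (bool \<Rightarrow> nat \<Rightarrow> nat \<Rightarrow> 'a \<Rightarrow> nat) \<Rightarrow> (bool \<Rightarrow> nat \<Rightarrow> nat \<Rightarrow> nat \<Rightarrow> 'a \<Rightarrow> real) \<Rightarrow> bool \<Rightarrow> nat \<Rightarrow> nat \<Rightarrow> 'a \<Rightarrow> real" where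
  "Yo M N W c i j \<omega> = obs M (N c i j \<omega>) (\<lambda>k. W c i j k \<omega>) i j"

locale SL = prob_space P for P :: "'a measure" +
  fixes n d :: nat and M :: "nat \<Rightarrow> nat \<Rightarrow> real" and \<sigma> \<mu> :: real
    and N :: "bool \<Rightarrow> nat \<Rightarrow> nat \<Rightarrow> 'a \<Rightarrow> nat"
    and W :: "bool \<Rightarrow> nat \<Rightarrow> nat \<Rightarrow> nat \<Rightarrow> 'a \<Rightarrow> real"
  assumes sig: "0 < \<sigma>" and mu: "0 < \<mu>"
    and N_meas: "\<forall>c i j. N c i j \<in> measurable P (count_space UNIV)"
    and N_pois: "\<forall>c. \<forall>i<n. \<forall>j<d. distr P (count_space UNIV) (N c i j) = measure_pmf (poisson_pmf \<mu>)"
    and W_subg: "\<forall>c. \<forall>i<n. \<forall>j<d. \<forall>k. subGaussian P \<sigma> (W c i j k)"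
    and indep: "indep_vars (\<lambda>_. borel) (Xv N W) (Idx n d)"
begin

lemma W_meas: "i < n \<Longrightarrow> j < d \<Longrightarrow> W c i j k \<in> borel_measurable P"
  using W_subg unfolding subGaussian_def by (auto intro: borel_measurable_integrable)

lemma Yo_meas: "i < n \<Longrightarrow> j < d \<Longrightarrow> Yo M N W c i j \<in> borel_measurable P"
  unfolding Yo_def[abs_def] using N_meas W_meas by (intro obs_measurable) auto

lemma indep_main:
  fixes F :: "(nat \<times> nat) set" and g :: "nat \<times> nat \<Rightarrow> real \<Rightarrow> real" and h :: "(ix \<Rightarrow> real) \<Rightarrow> real"
  assumes F: "finite F" "F \<subseteq> {..<n} \<times> {..<d}"
    and g: "\<And>p. p \<in> F \<Longrightarrow> g p \<in> borel_measurable borel" "\<And>p x. 0 \<le> g p x"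
    and h: "h \<in> borel_measurable (PiM (tagT n d) (\<lambda>_. borel))" "\<And>v. 0 \<le> h v"
  shows "(\<integral>\<^sup>+\<omega>. ennreal (h (restrict (\<lambda>x. Xv N W x \<omega>) (tagT n d))) * (\<Prod>p\<in>F. ennreal (g p (Yo M N W False (fst p) (snd p) \<omega>))) \<partial>P)
     = (\<integral>\<^sup>+\<omega>. ennreal (h (restrict (\<lambda>x. Xv N W x \<omega>) (tagT n d))) \<partial>P) *
       (\<Prod>p\<in>F. \<integral>\<^sup>+\<omega>. ennreal (g p (Yo M N W False (fst p) (snd p) \<omega>)) \<partial>P)"
proof -
  define Lset where "Lset = insert None (Some ` F)"
  define K where "K l = (case l of None \<Rightarrow> tagT n d | Some p \<Rightarrow> blk False (fst p) (snd p))" for l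
  define \<Phi> where "\<Phi> l = (case l of None \<Rightarrow> (\<lambda>v. ennreal (h v)) | Some p \<Rightarrow> (\<lambda>v. ennreal (g p (obsv M False (fst p) (snd p) v))))" for l
  have sub: "\<And>l. l \<in> Lset \<Longrightarrow> K l \<subseteq> Idx n d"
  proof -
    fix l assume l: "l \<in> Lset"
    show "K l \<subseteq> Idx n d"
    proof (cases l)
      case None thus ?thesis by (simp add: K_def tagT_def)
    next
      case (Some p)
      with l F(2) have "fst p < n" "snd p < d" unfolding Lset_def by auto
      thus ?thesis using Some by (simp add: K_def blk_sub_Idx)
    qed
  qed
  have disj: "disjoint_family_on K Lset"
    unfolding disjoint_family_on_def Lset_def K_def tagT_def blk_def by auto
  have ind1: "indep_vars (\<lambda>l. PiM (K l) (\<lambda>_. borel)) (\<lambda>l \<omega>. restrict (\<lambda>i. Xv N W i \<omega>) (K l)) Lset"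
    by (rule indep_vars_restrict[OF indep sub disj])
  have mPhi: "\<And>l. l \<in> Lset \<Longrightarrow> \<Phi> l \<in> borel_measurable (PiM (K l) (\<lambda>_. borel))"
  proof -
    fix l assume l: "l \<in> Lset"
    show "\<Phi> l \<in> borel_measurable (PiM (K l) (\<lambda>_. borel))"
    proof (cases l)
      case None thus ?thesis using h(1) by (simp add: \<Phi>_def K_def)
    next
      case (Some p)
      with l have p: "p \<in> F" unfolding Lset_def by auto
      have "obsv M False (fst p) (snd p) \<in> borel_measurable (PiM (K l) (\<lambda>_. borel))"
        using Some by (intro obsv_measurable) (simp add: K_def)
      from measurable_compose[OF this g(1)[OF p]] show ?thesis using Some by (simp add: \<Phi>_def)
    qed
  qed
  have ind2: "indep_vars (\<lambda>_. borel) (\<lambda>l \<omega>. \<Phi> l (restrict (\<lambda>i. Xv N W i \<omega>) (K l))) Lset"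
    by (rule indep_vars_compose2[OF ind1 mPhi])
  have fin: "finite Lset" using F(1) unfolding Lset_def by simp
  have nn: "\<And>l \<omega>. l \<in> Lset \<Longrightarrow> 0 \<le> \<Phi> l (restrict (\<lambda>i. Xv N W i \<omega>) (K l))"
    by simp
  have main: "(\<integral>\<^sup>+\<omega>. (\<Prod>l\<in>Lset. \<Phi> l (restrict (\<lambda>i. Xv N W i \<omega>) (K l))) \<partial>P)
     = (\<Prod>l\<in>Lset. \<integral>\<^sup>+\<omega>. (\<Phi> l (restrict (\<lambda>i. Xv N W i \<omega>) (K l))) \<partial>P)"
    by (rule indep_vars_nn_integral[where X="\<lambda>l \<omega>. \<Phi> l (restrict (\<lambda>i. Xv N W i \<omega>) (K l))", OF fin ind2 nn])
  have notin: "None \<notin> Some ` F" by auto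
  have ev: "\<And>p \<omega>. p \<in> F \<Longrightarrow> \<Phi> (Some p) (restrict (\<lambda>i. Xv N W i \<omega>) (K (Some p))) = ennreal (g p (Yo M N W False (fst p) (snd p) \<omega>))"
    by (simp add: \<Phi>_def K_def obsv_restrict Yo_def blk_def)
  have ev0: "\<And>\<omega>. \<Phi> None (restrict (\<lambda>i. Xv N W i \<omega>) (K None)) = ennreal (h (restrict (\<lambda>x. Xv N W x \<omega>) (tagT n d)))"
    by (simp add: \<Phi>_def K_def)
  have lhs: "\<And>\<omega>. (\<Prod>l\<in>Lset. \<Phi> l (restrict (\<lambda>i. Xv N W i \<omega>) (K l))) =
       ennreal (h (restrict (\<lambda>x. Xv N W x \<omega>) (tagT n d))) * (\<Prod>p\<in>F. ennreal (g p (Yo M N W False (fst p) (snd p) \<omega>)))"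
    unfolding Lset_def using F(1) notin
    by (simp add: prod.reindex ev ev0 cong: prod.cong)
  have rhs: "(\<Prod>l\<in>Lset. \<integral>\<^sup>+\<omega>. (\<Phi> l (restrict (\<lambda>i. Xv N W i \<omega>) (K l))) \<partial>P) =
     (\<integral>\<^sup>+\<omega>. ennreal (h (restrict (\<lambda>x. Xv N W x \<omega>) (tagT n d))) \<partial>P) *
       (\<Prod>p\<in>F. \<integral>\<^sup>+\<omega>. ennreal (g p (Yo M N W False (fst p) (snd p) \<omega>)) \<partial>P)"
    unfolding Lset_def using F(1) notin
    by (simp add: prod.reindex ev ev0 cong: prod.cong)
  show ?thesis using main unfolding lhs rhs .
qed


lemma N_meas': "N c i j \<in> measurable P (count_space UNIV)"
  using N_meas by auto

lemma setN_meas: "{\<omega> \<in> space P. N c i j \<omega> = m} \<in> sets P"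
proof -
  have "N c i j -` {m} \<inter> space P \<in> sets P" by (rule measurable_sets[OF N_meas']) simp
  moreover have "N c i j -` {m} \<inter> space P = {\<omega> \<in> space P. N c i j \<omega> = m}" by auto
  ultimately show ?thesis by simp
qed

lemma subg_nn:
  assumes "i < n" "j < d"
  shows "(\<integral>\<^sup>+\<omega>. ennreal (exp (r * W c i j k \<omega>)) \<partial>P) \<le> ennreal (exp (r^2 * \<sigma>^2 / 2))"
proof -
  have sg: "subGaussian P \<sigma> (W c i j k)" using W_subg assms by auto
  have int: "integrable P (\<lambda>\<omega>. exp (r * W c i j k \<omega>))" and le: "(\<integral>\<omega>. exp (r * W c i j k \<omega>) \<partial>P) \<le> exp (r^2 * \<sigma>^2 / 2)"
    using sg unfolding subGaussian_def by auto
  have "(\<integral>\<^sup>+\<omega>. ennreal (exp (r * W c i j k \<omega>)) \<partial>P) = ennreal (\<integral>\<omega>. exp (r * W c i j k \<omega>) \<partial>P)"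
    by (rule nn_integral_eq_integral[OF int]) simp
  also have "\<dots> \<le> ennreal (exp (r^2 * \<sigma>^2 / 2))" using le by (rule ennreal_leI)
  finally show ?thesis .
qed

lemma mgf_term:
  assumes ij: "i < n" "j < d" and m: "0 < m"
  shows "(\<integral>\<^sup>+\<omega>. indicator {\<omega>\<in>space P. N c i j \<omega> = m} \<omega> * ennreal (exp (t * Yo M N W c i j \<omega>)) \<partial>P)
     \<le> emeasure P {\<omega>\<in>space P. N c i j \<omega> = m} * ennreal (exp (t * M i j + t^2 * \<sigma>^2 / 2))"
proof -
  define Fm where "Fm = insert (Inl (c, i, j)) ((\<lambda>k. Inr (c, i, j, k)) ` {..<m})"
  have Fsub: "Fm \<subseteq> Idx n d" using ij unfolding Fm_def Idx_def by auto
  have ind: "indep_vars (\<lambda>_. borel) (Xv N W) Fm" by (rule indep_vars_subset[OF indep Fsub])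
  define \<phi> :: "ix \<Rightarrow> real \<Rightarrow> ennreal" where
    "\<phi> x r = (case x of Inl _ \<Rightarrow> ennreal (if r = real m then exp (t * M i j) else 0)
                     | Inr (_, _, _, k) \<Rightarrow> ennreal (exp (t / m * r)))" for x r
  have m\<phi>: "\<And>x. x \<in> Fm \<Longrightarrow> \<phi> x \<in> borel_measurable borel"
  proof -
    fix x :: ix
    show "\<phi> x \<in> borel_measurable borel"
    proof (cases x)
      case (Inl a) thus ?thesis unfolding \<phi>_def by simp
    next
      case (Inr b)
      obtain c1 i1 j1 k1 where "b = (c1, i1, j1, k1)" by (cases b) auto
      thus ?thesis using Inr unfolding \<phi>_def by simp
    qed
  qed
  have ind2: "indep_vars (\<lambda>_. borel) (\<lambda>x \<omega>. \<phi> x (Xv N W x \<omega>)) Fm"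
    by (rule indep_vars_compose2[OF ind m\<phi>])
  have fin: "finite Fm" unfolding Fm_def by simp
  have prodeq: "(\<integral>\<^sup>+\<omega>. (\<Prod>x\<in>Fm. \<phi> x (Xv N W x \<omega>)) \<partial>P) = (\<Prod>x\<in>Fm. \<integral>\<^sup>+\<omega>. \<phi> x (Xv N W x \<omega>) \<partial>P)"
    by (rule indep_vars_nn_integral[where X="\<lambda>x \<omega>. \<phi> x (Xv N W x \<omega>)", OF fin ind2]) simp
  have notin: "Inl (c, i, j) \<notin> (\<lambda>k. Inr (c, i, j, k)) ` {..<m}" by auto
  have inj: "inj_on (\<lambda>k. Inr (c, i, j, k) :: ix) {..<m}" by (auto simp: inj_on_def)
  have splitprod: "\<And>f. (\<Prod>x\<in>Fm. f x) = f (Inl (c, i, j)) * (\<Prod>k<m. f (Inr (c, i, j, k)))"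
    unfolding Fm_def using notin inj by (simp add: prod.reindex)
  have pw: "\<And>\<omega>. indicator {\<omega>\<in>space P. N c i j \<omega> = m} \<omega> * ennreal (exp (t * Yo M N W c i j \<omega>))
       \<le> (\<Prod>x\<in>Fm. \<phi> x (Xv N W x \<omega>))"
  proof -
    fix \<omega>
    show "indicator {\<omega>\<in>space P. N c i j \<omega> = m} \<omega> * ennreal (exp (t * Yo M N W c i j \<omega>))
       \<le> (\<Prod>x\<in>Fm. \<phi> x (Xv N W x \<omega>))"
    proof (cases "\<omega> \<in> space P \<and> N c i j \<omega> = m")
      case True
      hence Nm: "N c i j \<omega> = m" by simp
      have Y: "t * Yo M N W c i j \<omega> = t * M i j + (\<Sum>k<m. t / m * W c i j k \<omega>)"
        using Nm m by (simp add: Yo_def obs_def sum.distrib field_simps sum_distrib_left sum_divide_distrib)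
      have "(\<Prod>x\<in>Fm. \<phi> x (Xv N W x \<omega>)) = ennreal (exp (t * M i j)) * (\<Prod>k<m. ennreal (exp (t / m * W c i j k \<omega>)))"
        unfolding splitprod using Nm by (simp add: \<phi>_def Xv_def)
      also have "\<dots> = ennreal (exp (t * M i j) * (\<Prod>k<m. exp (t / m * W c i j k \<omega>)))"
        by (simp add: prod_ennreal ennreal_mult prod_nonneg)
      also have "\<dots> = ennreal (exp (t * Yo M N W c i j \<omega>))"
        unfolding Y by (simp add: exp_add exp_sum)
      finally show ?thesis using True by simp
    next
      case False thus ?thesis by (auto simp: indicator_def)
    qed
  qed
  have "(\<integral>\<^sup>+\<omega>. indicator {\<omega>\<in>space P. N c i j \<omega> = m} \<omega> * ennreal (exp (t * Yo M N W c i j \<omega>)) \<partial>P)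
      \<le> (\<integral>\<^sup>+\<omega>. (\<Prod>x\<in>Fm. \<phi> x (Xv N W x \<omega>)) \<partial>P)"
    by (intro nn_integral_mono pw)
  also have "\<dots> = (\<integral>\<^sup>+\<omega>. \<phi> (Inl (c, i, j)) (Xv N W (Inl (c, i, j)) \<omega>) \<partial>P) *
      (\<Prod>k<m. \<integral>\<^sup>+\<omega>. \<phi> (Inr (c, i, j, k)) (Xv N W (Inr (c, i, j, k)) \<omega>) \<partial>P)"
    using prodeq by (simp only: splitprod)
  also have "(\<integral>\<^sup>+\<omega>. \<phi> (Inl (c, i, j)) (Xv N W (Inl (c, i, j)) \<omega>) \<partial>P)
      = ennreal (exp (t * M i j)) * emeasure P {\<omega>\<in>space P. N c i j \<omega> = m}"
  proof -
    have "(\<integral>\<^sup>+\<omega>. \<phi> (Inl (c, i, j)) (Xv N W (Inl (c, i, j)) \<omega>) \<partial>P)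
        = (\<integral>\<^sup>+\<omega>. ennreal (exp (t * M i j)) * indicator {\<omega>\<in>space P. N c i j \<omega> = m} \<omega> \<partial>P)"
      by (intro nn_integral_cong) (simp add: \<phi>_def Xv_def indicator_def)
    also have "\<dots> = ennreal (exp (t * M i j)) * emeasure P {\<omega>\<in>space P. N c i j \<omega> = m}"
      using setN_meas by (simp add: nn_integral_cmult_indicator)
    finally show ?thesis .
  qed
  also have "(\<Prod>k<m. \<integral>\<^sup>+\<omega>. \<phi> (Inr (c, i, j, k)) (Xv N W (Inr (c, i, j, k)) \<omega>) \<partial>P)
      \<le> (\<Prod>k<m. ennreal (exp ((t / m)^2 * \<sigma>^2 / 2)))"
  proof (rule prod_mono_ennreal)
    fix k assume "k \<in> {..<m}"
    have "(\<integral>\<^sup>+\<omega>. \<phi> (Inr (c, i, j, k)) (Xv N W (Inr (c, i, j, k)) \<omega>) \<partial>P) = (\<integral>\<^sup>+\<omega>. ennreal (exp (t / m * W c i j k \<omega>)) \<partial>P)"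
      by (simp add: \<phi>_def Xv_def)
    also have "\<dots> \<le> ennreal (exp ((t / m)^2 * \<sigma>^2 / 2))" by (rule subg_nn[OF ij])
    finally show "(\<integral>\<^sup>+\<omega>. \<phi> (Inr (c, i, j, k)) (Xv N W (Inr (c, i, j, k)) \<omega>) \<partial>P) \<le> ennreal (exp ((t / m)^2 * \<sigma>^2 / 2))" .
  qed
  also have "(\<Prod>k<m. ennreal (exp ((t / m)^2 * \<sigma>^2 / 2))) \<le> ennreal (exp (t^2 * \<sigma>^2 / 2))"
  proof -
    have "(\<Prod>k<m. ennreal (exp ((t / m)^2 * \<sigma>^2 / 2))) = ennreal (exp (real m * ((t / m)^2 * \<sigma>^2 / 2)))"
      by (simp add: ennreal_power exp_of_nat_mult[symmetric] exp_power_int del: exp_of_nat_mult)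
    also have "real m * ((t / m)^2 * \<sigma>^2 / 2) = t^2 * \<sigma>^2 / 2 / m"
      using m by (simp add: power2_eq_square field_simps)
    also have "\<dots> \<le> t^2 * \<sigma>^2 / 2"
      using m divide_left_mono[of 1 "real m" "t^2 * \<sigma>^2 / 2"] by simp
    finally show ?thesis by (simp add: ennreal_leI)
  qed
  finally have "(\<integral>\<^sup>+\<omega>. indicator {\<omega>\<in>space P. N c i j \<omega> = m} \<omega> * ennreal (exp (t * Yo M N W c i j \<omega>)) \<partial>P)
     \<le> ennreal (exp (t * M i j)) * emeasure P {\<omega>\<in>space P. N c i j \<omega> = m} * ennreal (exp (t^2 * \<sigma>^2 / 2))"
    by (simp add: mult_left_mono)
  also have "\<dots> = emeasure P {\<omega>\<in>space P. N c i j \<omega> = m} * ennreal (exp (t * M i j + t^2 * \<sigma>^2 / 2))"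
    by (simp add: exp_add ennreal_mult mult.commute mult.left_commute)
  finally show ?thesis .
qed


lemma emeasure_N0:
  assumes "i < n" "j < d"
  shows "emeasure P {\<omega>\<in>space P. N c i j \<omega> = 0} = ennreal (exp (- \<mu>))"
proof -
  have "emeasure (distr P (count_space UNIV) (N c i j)) {0} = emeasure P (N c i j -` {0} \<inter> space P)"
    by (rule emeasure_distr[OF N_meas']) simp
  moreover have "emeasure (distr P (count_space UNIV) (N c i j)) {0} = ennreal (exp (- \<mu>))"
    using N_pois assms mu by (simp add: emeasure_pmf_single)
  moreover have "N c i j -` {0} \<inter> space P = {\<omega>\<in>space P. N c i j \<omega> = 0}" by auto
  ultimately show ?thesis by simp
qed

lemma mgf:
  assumes ij: "i < n" "j < d"
  shows "(\<integral>\<^sup>+\<omega>. ennreal (exp (t * Yo M N W c i j \<omega>)) \<partial>P)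
     \<le> ennreal (1 + (1 - exp (- \<mu>)) * (exp (t * M i j + t^2 * \<sigma>^2 / 2) - 1))"
proof -
  define A where "A m = {\<omega>\<in>space P. N c i j \<omega> = m}" for m
  define C where "C = exp (t * M i j + t^2 * \<sigma>^2 / 2)"
  have Ameas: "\<And>m. A m \<in> sets P" unfolding A_def by (rule setN_meas)
  have Ym: "Yo M N W c i j \<in> borel_measurable P" by (rule Yo_meas[OF ij])
  have pw: "\<And>\<omega>. \<omega> \<in> space P \<Longrightarrow> ennreal (exp (t * Yo M N W c i j \<omega>)) =
      indicator (A 0) \<omega> + (\<Sum>m. indicator (A (Suc m)) \<omega> * ennreal (exp (t * Yo M N W c i j \<omega>)))"
  proof -
    fix \<omega> assume \<omega>: "\<omega> \<in> space P"
    show "ennreal (exp (t * Yo M N W c i j \<omega>)) =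
      indicator (A 0) \<omega> + (\<Sum>m. indicator (A (Suc m)) \<omega> * ennreal (exp (t * Yo M N W c i j \<omega>)))"
    proof (cases "N c i j \<omega>")
      case 0
      hence "Yo M N W c i j \<omega> = 0" by (simp add: Yo_def obs_def)
      moreover have "\<And>m. indicator (A (Suc m)) \<omega> = (0::ennreal)" using 0 by (simp add: A_def indicator_def)
      ultimately show ?thesis using 0 \<omega> by (simp add: A_def indicator_def)
    next
      case (Suc m0)
      have "(\<lambda>m. indicator (A (Suc m)) \<omega> * ennreal (exp (t * Yo M N W c i j \<omega>))) =
            (\<lambda>m. if m = m0 then ennreal (exp (t * Yo M N W c i j \<omega>)) else 0)"
        using Suc \<omega> by (auto simp: A_def indicator_def)
      hence "(\<Sum>m. indicator (A (Suc m)) \<omega> * ennreal (exp (t * Yo M N W c i j \<omega>))) = ennreal (exp (t * Yo M N W c i j \<omega>))"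
        using sums_unique[OF sums_single[of m0 "\<lambda>_. ennreal (exp (t * Yo M N W c i j \<omega>))"]] by simp
      moreover have "indicator (A 0) \<omega> = (0::ennreal)" using Suc by (simp add: A_def indicator_def)
      ultimately show ?thesis by simp
    qed
  qed
  have "(\<integral>\<^sup>+\<omega>. ennreal (exp (t * Yo M N W c i j \<omega>)) \<partial>P) =
     (\<integral>\<^sup>+\<omega>. indicator (A 0) \<omega> + (\<Sum>m. indicator (A (Suc m)) \<omega> * ennreal (exp (t * Yo M N W c i j \<omega>))) \<partial>P)"
    by (rule nn_integral_cong) (rule pw)
  also have "\<dots> = emeasure P (A 0) + (\<Sum>m. \<integral>\<^sup>+\<omega>. indicator (A (Suc m)) \<omega> * ennreal (exp (t * Yo M N W c i j \<omega>)) \<partial>P)"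
  proof -
    have m1: "(\<lambda>\<omega>. (\<Sum>m. indicator (A (Suc m)) \<omega> * ennreal (exp (t * Yo M N W c i j \<omega>)))) \<in> borel_measurable P"
      using Ameas Ym by measurable
    have "(\<integral>\<^sup>+\<omega>. indicator (A 0) \<omega> + (\<Sum>m. indicator (A (Suc m)) \<omega> * ennreal (exp (t * Yo M N W c i j \<omega>))) \<partial>P)
       = (\<integral>\<^sup>+\<omega>. indicator (A 0) \<omega> \<partial>P) + (\<integral>\<^sup>+\<omega>. (\<Sum>m. indicator (A (Suc m)) \<omega> * ennreal (exp (t * Yo M N W c i j \<omega>))) \<partial>P)"
      using Ameas m1 by (intro nn_integral_add) auto
    also have "(\<integral>\<^sup>+\<omega>. (\<Sum>m. indicator (A (Suc m)) \<omega> * ennreal (exp (t * Yo M N W c i j \<omega>))) \<partial>P)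
      = (\<Sum>m. \<integral>\<^sup>+\<omega>. indicator (A (Suc m)) \<omega> * ennreal (exp (t * Yo M N W c i j \<omega>)) \<partial>P)"
      by (rule nn_integral_suminf) (use Ameas Ym in measurable)
    finally show ?thesis using Ameas by simp
  qed
  also have "(\<Sum>m. \<integral>\<^sup>+\<omega>. indicator (A (Suc m)) \<omega> * ennreal (exp (t * Yo M N W c i j \<omega>)) \<partial>P)
      \<le> (\<Sum>m. emeasure P (A (Suc m)) * ennreal C)"
    by (rule suminf_le) (auto simp: A_def C_def intro: mgf_term[OF ij])
  also have "(\<Sum>m. emeasure P (A (Suc m)) * ennreal C) = emeasure P (\<Union>m. A (Suc m)) * ennreal C"
    using Ameas by (subst suminf_emeasure[symmetric]) (auto simp: disjoint_family_on_def A_def)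
  also have "(\<Union>m. A (Suc m)) = space P - A 0"
    by (auto simp: A_def) (metis not0_implies_Suc)
  also have "emeasure P (space P - A 0) = ennreal (1 - exp (- \<mu>))"
  proof -
    have "emeasure P (space P - A 0) = emeasure P (space P) - emeasure P (A 0)"
      using Ameas by (simp add: emeasure_compl)
    thus ?thesis using emeasure_N0[OF ij] by (simp add: A_def emeasure_space_1) (metis ennreal_1 ennreal_minus exp_ge_zero)
  qed
  also have "emeasure P (A 0) = ennreal (exp (- \<mu>))" using emeasure_N0[OF ij] by (simp add: A_def)
  finally have "(\<integral>\<^sup>+\<omega>. ennreal (exp (t * Yo M N W c i j \<omega>)) \<partial>P)
      \<le> ennreal (exp (- \<mu>)) + ennreal (1 - exp (- \<mu>)) * ennreal C"
    by (simp add: add_left_mono)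
  also have "\<dots> = ennreal (exp (- \<mu>) + (1 - exp (- \<mu>)) * C)"
    using mu by (simp add: ennreal_mult[symmetric] C_def)
  also have "exp (- \<mu>) + (1 - exp (- \<mu>)) * C = 1 + (1 - exp (- \<mu>)) * (C - 1)"
    by (simp add: algebra_simps)
  finally show ?thesis unfolding C_def .
qed


lemma Xv_meas: "x \<in> Idx n d \<Longrightarrow> Xv N W x \<in> borel_measurable P"
  using indep unfolding indep_vars_def by auto

lemma restrict_meas: "(\<lambda>\<omega>. restrict (\<lambda>x. Xv N W x \<omega>) (tagT n d)) \<in> measurable P (PiM (tagT n d) (\<lambda>_. borel))"
  by (rule measurable_restrict) (auto simp: tagT_def intro: Xv_meas)

lemma chernoff:
  fixes S :: "nat set" and s T :: real and C :: "(ix \<Rightarrow> real) set"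
  assumes ii: "i < n" "i' < n" "i \<noteq> i'" and S: "S \<subseteq> {..<d}" and s: "0 \<le> s"
    and C: "C \<in> sets (PiM (tagT n d) (\<lambda>_. borel))"
  shows "emeasure P ({\<omega>\<in>space P. T < (\<Sum>j\<in>S. Yo M N W False i j \<omega> - Yo M N W False i' j \<omega>)}
              \<inter> {\<omega>\<in>space P. restrict (\<lambda>x. Xv N W x \<omega>) (tagT n d) \<in> C})
     \<le> ennreal (exp (- (s * T))) *
       (\<Prod>j\<in>S. ennreal (1 + (1 - exp (- \<mu>)) * (exp (s * M i j + s^2 * \<sigma>^2 / 2) - 1)) *
                ennreal (1 + (1 - exp (- \<mu>)) * (exp ((- s) * M i' j + (- s)^2 * \<sigma>^2 / 2) - 1))) *
       emeasure P {\<omega>\<in>space P. restrict (\<lambda>x. Xv N W x \<omega>) (tagT n d) \<in> C}"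
proof -
  define R where "R \<omega> = restrict (\<lambda>x. Xv N W x \<omega>) (tagT n d)" for \<omega>
  define A where "A = {\<omega>\<in>space P. T < (\<Sum>j\<in>S. Yo M N W False i j \<omega> - Yo M N W False i' j \<omega>)}"
  define B where "B = {\<omega>\<in>space P. R \<omega> \<in> C}"
  define F where "F = {i, i'} \<times> S"
  define sg where "sg a = (if a = i then s else - s)" for a
  define g where "g p r = exp (sg (fst p) * r)" for p :: "nat \<times> nat" and r
  define h :: "(ix \<Rightarrow> real) \<Rightarrow> real" where "h v = indicator C v" for v
  have finS: "finite S" using S finite_subset by blast
  have Rm: "R \<in> measurable P (PiM (tagT n d) (\<lambda>_. borel))" unfolding R_def[abs_def] by (rule restrict_meas)
  have Bm: "B \<in> sets P"
  proof -
    have "R -` C \<inter> space P \<in> sets P" by (rule measurable_sets[OF Rm C])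
    moreover have "R -` C \<inter> space P = B" unfolding B_def by auto
    ultimately show ?thesis by simp
  qed
  have Ym: "\<And>a j. a < n \<Longrightarrow> j \<in> S \<Longrightarrow> Yo M N W False a j \<in> borel_measurable P"
    using S by (intro Yo_meas) auto
  have Am: "A \<in> sets P"
  proof -
    have "(\<lambda>\<omega>. \<Sum>j\<in>S. Yo M N W False i j \<omega> - Yo M N W False i' j \<omega>) \<in> borel_measurable P"
      using Ym ii by (intro borel_measurable_sum borel_measurable_diff) auto
    thus ?thesis unfolding A_def by measurable
  qed
  have F: "finite F" "F \<subseteq> {..<n} \<times> {..<d}" unfolding F_def using finS S ii by auto
  have gm: "\<And>p. p \<in> F \<Longrightarrow> g p \<in> borel_measurable borel" unfolding g_def by simp
  have gnn: "\<And>p x. 0 \<le> g p x" unfolding g_def by simp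
  have hm: "h \<in> borel_measurable (PiM (tagT n d) (\<lambda>_. borel))" unfolding h_def[abs_def] using C by simp
  have hnn: "\<And>v. 0 \<le> h v" unfolding h_def by simp
  have prodF: "\<And>f :: nat \<times> nat \<Rightarrow> ennreal. (\<Prod>p\<in>F. f p) = (\<Prod>j\<in>S. f (i, j) * f (i', j))"
  proof -
    fix f :: "nat \<times> nat \<Rightarrow> ennreal"
    have "(\<Prod>p\<in>F. f p) = (\<Prod>a\<in>{i, i'}. \<Prod>j\<in>S. f (a, j))"
      unfolding F_def by (simp add: prod.cartesian_product)
    also have "\<dots> = (\<Prod>j\<in>S. f (i, j)) * (\<Prod>j\<in>S. f (i', j))" using ii by simp
    also have "\<dots> = (\<Prod>j\<in>S. f (i, j) * f (i', j))" by (rule prod.distrib[symmetric])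
    finally show "(\<Prod>p\<in>F. f p) = (\<Prod>j\<in>S. f (i, j) * f (i', j))" .
  qed
  have pw: "\<And>\<omega>. \<omega> \<in> space P \<Longrightarrow> indicator (A \<inter> B) \<omega>
      \<le> ennreal (exp (- (s * T))) * (ennreal (h (R \<omega>)) * (\<Prod>p\<in>F. ennreal (g p (Yo M N W False (fst p) (snd p) \<omega>))))"
  proof -
    fix \<omega> assume \<omega>: "\<omega> \<in> space P"
    show "indicator (A \<inter> B) \<omega>
      \<le> ennreal (exp (- (s * T))) * (ennreal (h (R \<omega>)) * (\<Prod>p\<in>F. ennreal (g p (Yo M N W False (fst p) (snd p) \<omega>))))"
    proof (cases "\<omega> \<in> A \<inter> B")
      case False thus ?thesis by simp
    next
      case True
      hence hR: "h (R \<omega>) = 1" unfolding B_def h_def by simp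
      have sumT: "T < (\<Sum>j\<in>S. Yo M N W False i j \<omega> - Yo M N W False i' j \<omega>)" using True unfolding A_def by simp
      have "(\<Prod>p\<in>F. ennreal (g p (Yo M N W False (fst p) (snd p) \<omega>)))
          = (\<Prod>j\<in>S. ennreal (exp (s * Yo M N W False i j \<omega>)) * ennreal (exp (- s * Yo M N W False i' j \<omega>)))"
        unfolding prodF using ii by (simp add: g_def sg_def)
      also have "\<dots> = ennreal (\<Prod>j\<in>S. exp (s * Yo M N W False i j \<omega>) * exp (- s * Yo M N W False i' j \<omega>))"
        by (simp add: prod_ennreal ennreal_mult[symmetric])
      also have "(\<Prod>j\<in>S. exp (s * Yo M N W False i j \<omega>) * exp (- s * Yo M N W False i' j \<omega>))
          = exp (s * (\<Sum>j\<in>S. Yo M N W False i j \<omega> - Yo M N W False i' j \<omega>))"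
      proof -
        have "(\<Prod>j\<in>S. exp (s * Yo M N W False i j \<omega>) * exp (- s * Yo M N W False i' j \<omega>))
            = (\<Prod>j\<in>S. exp (s * (Yo M N W False i j \<omega> - Yo M N W False i' j \<omega>)))"
          by (rule prod.cong) (simp_all add: exp_add[symmetric] algebra_simps)
        also have "\<dots> = exp (\<Sum>j\<in>S. s * (Yo M N W False i j \<omega> - Yo M N W False i' j \<omega>))"
          using finS by (simp add: exp_sum)
        finally show ?thesis by (simp only: sum_distrib_left)
      qed
      finally have pe: "(\<Prod>p\<in>F. ennreal (g p (Yo M N W False (fst p) (snd p) \<omega>)))
          = ennreal (exp (s * (\<Sum>j\<in>S. Yo M N W False i j \<omega> - Yo M N W False i' j \<omega>)))" .
      have "1 \<le> exp (- (s * T)) * exp (s * (\<Sum>j\<in>S. Yo M N W False i j \<omega> - Yo M N W False i' j \<omega>))"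
      proof -
        have "s * T \<le> s * (\<Sum>j\<in>S. Yo M N W False i j \<omega> - Yo M N W False i' j \<omega>)"
          using sumT s by (intro mult_left_mono) auto
        thus ?thesis by (simp add: exp_add[symmetric])
      qed
      hence "ennreal 1 \<le> ennreal (exp (- (s * T))) * ennreal (exp (s * (\<Sum>j\<in>S. Yo M N W False i j \<omega> - Yo M N W False i' j \<omega>)))"
        by (simp add: ennreal_mult[symmetric] ennreal_leI)
      thus ?thesis using True unfolding hR pe by simp
    qed
  qed
  have "emeasure P (A \<inter> B) = (\<integral>\<^sup>+\<omega>. indicator (A \<inter> B) \<omega> \<partial>P)" using Am Bm by simp
  also have "\<dots> \<le> (\<integral>\<^sup>+\<omega>. ennreal (exp (- (s * T))) * (ennreal (h (R \<omega>)) * (\<Prod>p\<in>F. ennreal (g p (Yo M N W False (fst p) (snd p) \<omega>)))) \<partial>P)"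
    by (rule nn_integral_mono) (rule pw)
  also have "\<dots> = ennreal (exp (- (s * T))) * (\<integral>\<^sup>+\<omega>. ennreal (h (R \<omega>)) * (\<Prod>p\<in>F. ennreal (g p (Yo M N W False (fst p) (snd p) \<omega>))) \<partial>P)"
  proof (rule nn_integral_cmult)
    show "(\<lambda>\<omega>. ennreal (h (R \<omega>)) * (\<Prod>p\<in>F. ennreal (g p (Yo M N W False (fst p) (snd p) \<omega>)))) \<in> borel_measurable P"
    proof (intro borel_measurable_times_ennreal borel_measurable_prod_ennreal)
      show "(\<lambda>\<omega>. ennreal (h (R \<omega>))) \<in> borel_measurable P"
        using measurable_compose[OF Rm hm] by simp
      fix p assume "p \<in> F"
      hence "fst p < n" "snd p \<in> S" unfolding F_def using ii by auto
      hence "Yo M N W False (fst p) (snd p) \<in> borel_measurable P" by (rule Ym)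
      thus "(\<lambda>\<omega>. ennreal (g p (Yo M N W False (fst p) (snd p) \<omega>))) \<in> borel_measurable P"
        unfolding g_def by simp
    qed
  qed
  also have "(\<integral>\<^sup>+\<omega>. ennreal (h (R \<omega>)) * (\<Prod>p\<in>F. ennreal (g p (Yo M N W False (fst p) (snd p) \<omega>))) \<partial>P)
      = (\<integral>\<^sup>+\<omega>. ennreal (h (R \<omega>)) \<partial>P) * (\<Prod>p\<in>F. \<integral>\<^sup>+\<omega>. ennreal (g p (Yo M N W False (fst p) (snd p) \<omega>)) \<partial>P)"
    unfolding R_def by (rule indep_main[OF F gm gnn hm hnn])
  also have "(\<integral>\<^sup>+\<omega>. ennreal (h (R \<omega>)) \<partial>P) = emeasure P B"
  proof -
    have "(\<integral>\<^sup>+\<omega>. ennreal (h (R \<omega>)) \<partial>P) = (\<integral>\<^sup>+\<omega>. indicator B \<omega> \<partial>P)"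
      by (rule nn_integral_cong) (simp add: h_def B_def indicator_def)
    thus ?thesis using Bm by simp
  qed
  also have "(\<Prod>p\<in>F. \<integral>\<^sup>+\<omega>. ennreal (g p (Yo M N W False (fst p) (snd p) \<omega>)) \<partial>P)
     \<le> (\<Prod>j\<in>S. ennreal (1 + (1 - exp (- \<mu>)) * (exp (s * M i j + s^2 * \<sigma>^2 / 2) - 1)) *
                ennreal (1 + (1 - exp (- \<mu>)) * (exp ((- s) * M i' j + (- s)^2 * \<sigma>^2 / 2) - 1)))"
    unfolding prodF
  proof (rule prod_mono_ennreal)
    fix j assume j: "j \<in> S"
    hence jd: "j < d" using S by auto
    have a: "(\<integral>\<^sup>+\<omega>. ennreal (g (i, j) (Yo M N W False (fst (i, j)) (snd (i, j)) \<omega>)) \<partial>P)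
       \<le> ennreal (1 + (1 - exp (- \<mu>)) * (exp (s * M i j + s^2 * \<sigma>^2 / 2) - 1))"
      using mgf[OF ii(1) jd, of s False] by (simp add: g_def sg_def)
    have b: "(\<integral>\<^sup>+\<omega>. ennreal (g (i', j) (Yo M N W False (fst (i', j)) (snd (i', j)) \<omega>)) \<partial>P)
       \<le> ennreal (1 + (1 - exp (- \<mu>)) * (exp ((- s) * M i' j + (- s)^2 * \<sigma>^2 / 2) - 1))"
      using mgf[OF ii(2) jd, of "- s" False] ii(3) by (simp add: g_def sg_def)
    show "(\<integral>\<^sup>+\<omega>. ennreal (g (i, j) (Yo M N W False (fst (i, j)) (snd (i, j)) \<omega>)) \<partial>P) *
          (\<integral>\<^sup>+\<omega>. ennreal (g (i', j) (Yo M N W False (fst (i', j)) (snd (i', j)) \<omega>)) \<partial>P)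
       \<le> ennreal (1 + (1 - exp (- \<mu>)) * (exp (s * M i j + s^2 * \<sigma>^2 / 2) - 1)) *
         ennreal (1 + (1 - exp (- \<mu>)) * (exp ((- s) * M i' j + (- s)^2 * \<sigma>^2 / 2) - 1))"
      by (rule mult_mono[OF a b]) auto
  qed
  finally show ?thesis unfolding A_def B_def R_def
    by (simp add: mult_left_mono mult_right_mono mult.assoc mult.left_commute mult.commute)
qed

end




definition yTv :: "(nat \<Rightarrow> nat \<Rightarrow> real) \<Rightarrow> nat \<Rightarrow> nat \<Rightarrow> (ix \<Rightarrow> real) \<Rightarrow> nat \<Rightarrow> nat \<Rightarrow> real" where
  "yTv M n d v i j = (if i < n \<and> j < d then obsv M True i j v else 0)"

definition CS :: "(nat \<Rightarrow> nat \<Rightarrow> real) \<Rightarrow> nat \<Rightarrow> nat \<Rightarrow> real \<Rightarrow> real \<Rightarrow> real \<Rightarrow> nat set \<Rightarrow> nat set \<Rightarrow> nat set \<Rightarrow> (ix \<Rightarrow> real) set" where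
  "CS M n d \<rho> l1 \<gamma> E Q S = {v \<in> space (PiM (tagT n d) (\<lambda>_. borel)). S \<in> Qfam (yTv M n d v) \<rho> l1 \<gamma> E Q}"

lemma yTv_meas: "(\<lambda>v. yTv M n d v i j) \<in> borel_measurable (PiM (tagT n d) (\<lambda>_. borel))"
proof (cases "i < n \<and> j < d")
  case True
  hence "obsv M True i j \<in> borel_measurable (PiM (tagT n d) (\<lambda>_. borel))"
    by (intro obsv_measurable blk_sub_tagT) auto
  thus ?thesis using True by (simp add: yTv_def)
next
  case False
  hence "(\<lambda>v. yTv M n d v i j) = (\<lambda>v. 0)" by (auto simp: yTv_def)
  thus ?thesis by simp
qed

lemma CS_meas: "finite E \<Longrightarrow> finite Q \<Longrightarrow> CS M n d \<rho> l1 \<gamma> E Q S \<in> sets (PiM (tagT n d) (\<lambda>_. borel))"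
  unfolding CS_def by (rule Qfam_pred) (auto intro: yTv_meas)

context SL begin

definition YoT where "YoT c i j \<omega> = (if i < n \<and> j < d then Yo M N W c i j \<omega> else 0)"

lemma YoT_meas[measurable]: "YoT c i j \<in> borel_measurable P"
  unfolding YoT_def[abs_def] by (cases "i < n \<and> j < d") (auto intro: Yo_meas)

lemma Bs_iff:
  assumes \<omega>: "\<omega> \<in> space P" and E: "E \<subseteq> {..<n}" and Q: "Q \<subseteq> {..<d}"
  shows "restrict (\<lambda>x. Xv N W x \<omega>) (tagT n d) \<in> CS M n d \<rho> l1 \<gamma> E Q S \<longleftrightarrow>
     S \<in> Qfam (\<lambda>i j. Yo M N W True i j \<omega>) \<rho> l1 \<gamma> E Q"
proof -
  have sp: "restrict (\<lambda>x. Xv N W x \<omega>) (tagT n d) \<in> space (PiM (tagT n d) (\<lambda>_. borel))"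
    using measurable_space[OF restrict_meas \<omega>] .
  have "Qfam (yTv M n d (restrict (\<lambda>x. Xv N W x \<omega>) (tagT n d))) \<rho> l1 \<gamma> E Q = Qfam (\<lambda>i j. Yo M N W True i j \<omega>) \<rho> l1 \<gamma> E Q"
  proof (rule Qfam_cong)
    fix i j assume "i \<in> E" "j \<in> Q"
    hence ij: "i < n" "j < d" using E Q by auto
    show "yTv M n d (restrict (\<lambda>x. Xv N W x \<omega>) (tagT n d)) i j = Yo M N W True i j \<omega>"
      using ij by (simp add: yTv_def Yo_def obsv_restrict blk_sub_tagT)
  qed
  thus ?thesis using sp unfolding CS_def by simp
qed

lemma Gt_pred:
  assumes fE: "finite E" and E: "E \<subseteq> {..<n}" and Q: "Q \<subseteq> {..<d}"
  shows "Measurable.pred P (\<lambda>\<omega>. Gupd (\<lambda>i j. Yo M N W True i j \<omega>) (\<lambda>i j. Yo M N W False i j \<omega>) \<rho> l1 \<gamma> E Q G i i')"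
proof -
  have fQ: "finite Q" using Q finite_subset by blast
  have fP: "finite (Pow Q)" using fQ by simp
  have CSm[measurable]: "\<And>S. CS M n d \<rho> l1 \<gamma> E Q S \<in> sets (PiM (tagT n d) (\<lambda>_. borel))"
    using fE fQ by (rule CS_meas)
  have Rm[measurable]: "(\<lambda>\<omega>. restrict (\<lambda>x. Xv N W x \<omega>) (tagT n d)) \<in> measurable P (PiM (tagT n d) (\<lambda>_. borel))"
    by (rule restrict_meas)
  have eq: "\<And>\<omega>. \<omega> \<in> space P \<Longrightarrow> Gupd (\<lambda>i j. Yo M N W True i j \<omega>) (\<lambda>i j. Yo M N W False i j \<omega>) \<rho> l1 \<gamma> E Q G i i'
     \<longleftrightarrow> G i i' \<or> (i \<in> E \<and> i' \<in> E \<and> (\<exists>S\<in>Pow Q. restrict (\<lambda>x. Xv N W x \<omega>) (tagT n d) \<in> CS M n d \<rho> l1 \<gamma> E Q S \<and>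
          (1 / real (card S)) * (\<Sum>j\<in>S. YoT False i j \<omega> - YoT False i' j \<omega>) > 2 * \<rho> * sqrt (l1 / real (card S))))"
  proof -
    fix \<omega> assume \<omega>: "\<omega> \<in> space P"
    have yy: "\<And>S. S \<subseteq> Q \<Longrightarrow> i \<in> E \<Longrightarrow> i' \<in> E \<Longrightarrow> (\<Sum>j\<in>S. YoT False i j \<omega> - YoT False i' j \<omega>) = (\<Sum>j\<in>S. Yo M N W False i j \<omega> - Yo M N W False i' j \<omega>)"
      using E Q by (intro sum.cong) (auto simp: YoT_def)
    show "?thesis \<omega>" unfolding Gupd_def using Bs_iff[OF \<omega> E Q] Qfam_sub yy
      by (smt (verit, best) PowD PowI)
  qed
  have "{\<omega>\<in>space P. Gupd (\<lambda>i j. Yo M N W True i j \<omega>) (\<lambda>i j. Yo M N W False i j \<omega>) \<rho> l1 \<gamma> E Q G i i'} =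
      {\<omega>\<in>space P. G i i' \<or> (i \<in> E \<and> i' \<in> E \<and> (\<exists>S\<in>Pow Q. restrict (\<lambda>x. Xv N W x \<omega>) (tagT n d) \<in> CS M n d \<rho> l1 \<gamma> E Q S \<and>
          (1 / real (card S)) * (\<Sum>j\<in>S. YoT False i j \<omega> - YoT False i' j \<omega>) > 2 * \<rho> * sqrt (l1 / real (card S))))}"
    using eq by blast
  also have "\<dots> \<in> sets P" using fP by measurable
  finally show ?thesis unfolding pred_def .
qed


lemma factor_bound:
  fixes l1 z :: real
  assumes "0 \<le> l1" "l1 \<le> 1" "0 \<le> z"
  shows "0 \<le> 1 + l1 * (z - 1)" "1 + l1 * (z - 1) \<le> exp (l1 * (z - 1))"
proof -
  have "l1 * (z - 1) \<ge> - l1" using assms by (simp add: algebra_simps)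
  thus "0 \<le> 1 + l1 * (z - 1)" using assms by linarith
  show "1 + l1 * (z - 1) \<le> exp (l1 * (z - 1))" by (rule exp_ge_add_one_self)
qed

lemma test_bound:
  fixes S :: "nat set" and C :: "(ix \<Rightarrow> real) set" and L \<rho> l1 :: real
  assumes ii: "i < n" "i' < n" "i \<noteq> i'" and S: "S \<subseteq> {..<d}" "S \<noteq> {}"
    and Mrow: "\<forall>j\<in>S. 0 \<le> M i j \<and> M i j \<le> M i' j \<and> M i' j \<le> 1"
    and L: "0 < L" and rho: "\<rho> = max 1 \<sigma> * exp 1 * sqrt (8 * L)" and l1: "l1 = 1 - exp (- \<mu>)"
    and gam: "2 * L / (l1 * (exp 1)^2) \<le> real (card S)"
    and C: "C \<in> sets (PiM (tagT n d) (\<lambda>_. borel))"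
  shows "measure P ({\<omega>\<in>space P. 2 * \<rho> * sqrt (l1 * real (card S)) < (\<Sum>j\<in>S. Yo M N W False i j \<omega> - Yo M N W False i' j \<omega>)}
              \<inter> {\<omega>\<in>space P. restrict (\<lambda>x. Xv N W x \<omega>) (tagT n d) \<in> C})
     \<le> exp (- 3 * L) * measure P {\<omega>\<in>space P. restrict (\<lambda>x. Xv N W x \<omega>) (tagT n d) \<in> C}"
proof -
  define K where "K = real (card S)"
  define u where "u = l1 * K"
  define m where "m = max 1 \<sigma>"
  define x where "x = (if L \<le> u then sqrt (L / u) else 1)"
  define s where "s = x / m"
  define T where "T = 2 * \<rho> * sqrt u"
  have finS: "finite S" using S(1) finite_subset by blast
  have Kpos: "0 < K" using finS S(2) unfolding K_def by (simp add: card_gt_0_iff)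
  have l1pos: "0 < l1" using mu l1 by simp
  have l1le: "l1 \<le> 1" using l1 by simp
  have m1: "1 \<le> m" unfolding m_def by simp
  have uge: "2 * L / (exp 1)^2 \<le> u"
  proof -
    have "2 * L / (exp 1)^2 = l1 * (2 * L / (l1 * (exp 1)^2))" using l1pos by (simp add: field_simps)
    also have "\<dots> \<le> l1 * K" using gam l1pos unfolding K_def by (intro mult_left_mono) auto
    finally show ?thesis unfolding u_def .
  qed
  note eb = exponent_bound[OF L uge m1]
  have x0: "0 < x" and x1: "x \<le> 1" using eb(1,2) unfolding x_def by auto
  have expo: "- (s * T) + 6 * x^2 * u \<le> - 3 * L"
    using eb(3) unfolding x_def[symmetric] s_def T_def rho m_def[symmetric] by (simp add: mult.assoc)
  have s0: "0 \<le> s" unfolding s_def using x0 m1 by simp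
  have Teq: "T = 2 * \<rho> * sqrt (l1 * real (card S))" unfolding T_def u_def K_def ..
  have ch: "emeasure P ({\<omega>\<in>space P. T < (\<Sum>j\<in>S. Yo M N W False i j \<omega> - Yo M N W False i' j \<omega>)}
              \<inter> {\<omega>\<in>space P. restrict (\<lambda>x. Xv N W x \<omega>) (tagT n d) \<in> C})
     \<le> ennreal (exp (- (s * T))) *
       (\<Prod>j\<in>S. ennreal (1 + (1 - exp (- \<mu>)) * (exp (s * M i j + s^2 * \<sigma>^2 / 2) - 1)) *
                ennreal (1 + (1 - exp (- \<mu>)) * (exp ((- s) * M i' j + (- s)^2 * \<sigma>^2 / 2) - 1))) *
       emeasure P {\<omega>\<in>space P. restrict (\<lambda>x. Xv N W x \<omega>) (tagT n d) \<in> C}"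
    by (rule chernoff[OF ii S(1) s0 C])
  define f1 where "f1 j = 1 + l1 * (exp (s * M i j + s^2 * \<sigma>^2 / 2) - 1)" for j
  define f2 where "f2 j = 1 + l1 * (exp ((- s) * M i' j + (- s)^2 * \<sigma>^2 / 2) - 1)" for j
  have f1: "\<And>j. 0 \<le> f1 j" "\<And>j. f1 j \<le> exp (l1 * (exp (s * M i j + s^2 * \<sigma>^2 / 2) - 1))"
    unfolding f1_def using factor_bound[OF _ l1le] l1pos by auto
  have f2: "\<And>j. 0 \<le> f2 j" "\<And>j. f2 j \<le> exp (l1 * (exp ((- s) * M i' j + (- s)^2 * \<sigma>^2 / 2) - 1))"
    unfolding f2_def using factor_bound[OF _ l1le] l1pos by auto
  have pj: "\<And>j. j \<in> S \<Longrightarrow> f1 j * f2 j \<le> exp (l1 * (6 * x^2))"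
  proof -
    fix j assume j: "j \<in> S"
    have "f1 j * f2 j \<le> exp (l1 * (exp (s * M i j + s^2 * \<sigma>^2 / 2) - 1)) * exp (l1 * (exp ((- s) * M i' j + (- s)^2 * \<sigma>^2 / 2) - 1))"
      by (intro mult_mono f1 f2) auto
    also have "\<dots> = exp (l1 * (exp (s^2 * \<sigma>^2 / 2) * (exp (s * M i j) + exp (- (s * M i' j))) - 2))"
    proof -
      have e1: "exp (s * M i j + s^2 * \<sigma>^2 / 2) = exp (s^2 * \<sigma>^2 / 2) * exp (s * M i j)"
        by (simp add: exp_add mult.commute)
      have e2: "exp ((- s) * M i' j + (- s)^2 * \<sigma>^2 / 2) = exp (s^2 * \<sigma>^2 / 2) * exp (- (s * M i' j))"
        by (simp add: exp_add[symmetric] exp_diff[symmetric] mult.commute)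
      have "exp (l1 * (exp (s * M i j + s^2 * \<sigma>^2 / 2) - 1)) * exp (l1 * (exp ((- s) * M i' j + (- s)^2 * \<sigma>^2 / 2) - 1))
          = exp (l1 * (exp (s * M i j + s^2 * \<sigma>^2 / 2) - 1) + l1 * (exp ((- s) * M i' j + (- s)^2 * \<sigma>^2 / 2) - 1))"
        by (rule exp_add[symmetric])
      also have "l1 * (exp (s * M i j + s^2 * \<sigma>^2 / 2) - 1) + l1 * (exp ((- s) * M i' j + (- s)^2 * \<sigma>^2 / 2) - 1)
          = l1 * (exp (s^2 * \<sigma>^2 / 2) * (exp (s * M i j) + exp (- (s * M i' j))) - 2)"
        unfolding e1 e2 by (simp add: algebra_simps)
      finally show ?thesis .
    qed
    also have "\<dots> \<le> exp (l1 * (6 * x^2))"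
    proof -
      have "exp (s^2 * \<sigma>^2 / 2) * (exp (s * M i j) + exp (- (s * M i' j))) \<le> 2 + 6 * x^2"
        using Mrow j by (intro per_j_bound[OF x0 x1 m_def sig s_def]) auto
      thus ?thesis using l1pos by (simp add: mult_left_mono)
    qed
    finally show "f1 j * f2 j \<le> exp (l1 * (6 * x^2))" .
  qed
  have prodb: "(\<Prod>j\<in>S. f1 j * f2 j) \<le> exp (6 * x^2 * u)"
  proof -
    have "(\<Prod>j\<in>S. f1 j * f2 j) \<le> (\<Prod>j\<in>S. exp (l1 * (6 * x^2)))"
      using pj f1 f2 by (intro prod_mono) auto
    also have "\<dots> = exp (K * (l1 * (6 * x^2)))" unfolding K_def by (simp add: exp_of_nat_mult[symmetric])
    finally show ?thesis unfolding u_def by (simp add: algebra_simps)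
  qed
  have "(\<Prod>j\<in>S. ennreal (f1 j) * ennreal (f2 j)) = ennreal (\<Prod>j\<in>S. f1 j * f2 j)"
    using f1 f2 by (simp add: prod_ennreal ennreal_mult[symmetric] mult_nonneg_nonneg)
  hence st1: "emeasure P ({\<omega>\<in>space P. T < (\<Sum>j\<in>S. Yo M N W False i j \<omega> - Yo M N W False i' j \<omega>)}
              \<inter> {\<omega>\<in>space P. restrict (\<lambda>x. Xv N W x \<omega>) (tagT n d) \<in> C})
     \<le> ennreal (exp (- (s * T))) * ennreal (\<Prod>j\<in>S. f1 j * f2 j) *
       emeasure P {\<omega>\<in>space P. restrict (\<lambda>x. Xv N W x \<omega>) (tagT n d) \<in> C}"
    using ch unfolding f1_def f2_def l1 by simp
  have st2: "ennreal (exp (- (s * T))) * ennreal (\<Prod>j\<in>S. f1 j * f2 j) \<le> ennreal (exp (- 3 * L))"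
  proof -
    have "exp (- (s * T)) * (\<Prod>j\<in>S. f1 j * f2 j) \<le> exp (- (s * T)) * exp (6 * x^2 * u)"
      by (intro mult_left_mono prodb) simp
    also have "\<dots> = exp (- (s * T) + 6 * x^2 * u)" by (rule exp_add[symmetric])
    also have "\<dots> \<le> exp (- 3 * L)" using expo by simp
    finally show ?thesis
      by (simp add: ennreal_mult[symmetric] prod_nonneg f1 f2 ennreal_leI)
  qed
  have "emeasure P ({\<omega>\<in>space P. T < (\<Sum>j\<in>S. Yo M N W False i j \<omega> - Yo M N W False i' j \<omega>)}
              \<inter> {\<omega>\<in>space P. restrict (\<lambda>x. Xv N W x \<omega>) (tagT n d) \<in> C})
     \<le> ennreal (exp (- 3 * L)) * emeasure P {\<omega>\<in>space P. restrict (\<lambda>x. Xv N W x \<omega>) (tagT n d) \<in> C}"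
    by (rule order_trans[OF st1 mult_right_mono[OF st2]]) simp
  thus ?thesis unfolding Teq
    by (simp add: emeasure_eq_measure ennreal_mult[symmetric] ennreal_le_iff)
qed

end


lemma final_arith:
  fixes nr dr cm sm \<delta> q cq np :: real
  assumes nr: "1 \<le> nr" and dr: "1 \<le> dr" and cm: "1 \<le> cm" and sm: "1 \<le> sm"
    and \<delta>: "0 < \<delta>" "\<delta> < 1" and np: "0 \<le> np" "np \<le> nr^2" and cq: "0 \<le> cq" "cq \<le> 6 * nr * q" and q: "0 \<le> q"
  shows "np * exp (- 3 * ln (24 * nr * dr * sm * cm / \<delta>)) * cq \<le> q * \<delta> / (12 * cm * dr)"
proof -
  define Z where "Z = 24 * nr * dr * sm * cm / \<delta>"
  have Zp: "0 < Z" unfolding Z_def using nr dr sm cm \<delta> by simp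
  define r where "r = \<delta> / (24 * nr * dr * sm * cm)"
  have rZ: "r = 1 / Z" unfolding r_def Z_def by simp
  have r0: "0 < r" unfolding r_def using nr dr sm cm \<delta> by simp
  have e3: "exp (- 3 * ln Z) = r^3"
  proof -
    have "exp (- 3 * ln Z) = exp (real 3 * (- ln Z))" by simp
    also have "\<dots> = exp (- ln Z) ^ 3" by (rule exp_of_nat_mult)
    also have "exp (- ln Z) = 1 / Z" using Zp by (simp add: exp_minus inverse_eq_divide)
    finally show ?thesis using rZ by simp
  qed
  define a where "a = nr * r"
  have a0: "0 < a" unfolding a_def using r0 nr by simp
  have aeq: "a = \<delta> / (24 * dr * sm * cm)" unfolding a_def r_def using nr by (simp add: field_simps)
  have a1: "a \<le> 1 / 24"
  proof -
    have p1: "1 * 1 \<le> dr * sm" using dr sm by (intro mult_mono) auto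
    have p2: "1 * 1 \<le> (dr * sm) * cm" using p1 cm by (intro mult_mono) auto
    have "24 * 1 \<le> 24 * ((dr * sm) * cm)" using p2 by (intro mult_left_mono) auto
    hence "24 \<le> 24 * dr * sm * cm" by (simp add: mult.assoc)
    hence "\<delta> / (24 * dr * sm * cm) \<le> 1 / 24" using \<delta> by (simp add: field_simps)
    thus ?thesis using aeq by simp
  qed
  have "np * r^3 * cq \<le> nr^2 * r^3 * (6 * nr * q)"
    using np cq r0 q by (intro mult_mono) auto
  also have "\<dots> = 6 * q * a^3" unfolding a_def by (simp add: power2_eq_square power3_eq_cube)
  also have "a^3 \<le> a * (1/24)^2"
  proof -
    have "a^2 \<le> (1/24)^2" using a0 a1 by (intro power_mono) auto
    thus ?thesis using a0 by (simp add: power3_eq_cube power2_eq_square mult_left_mono)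
  qed
  hence "6 * q * a^3 \<le> 6 * q * (a * (1/24)^2)" using q by (intro mult_left_mono) auto
  also have "6 * q * (a * (1/24)^2) = q * \<delta> / (96 * 24 * dr * sm * cm)" unfolding aeq using dr sm cm by (simp add: field_simps power2_eq_square)
  also have "\<dots> \<le> q * \<delta> / (12 * cm * dr)"
  proof (rule divide_left_mono)
    show "12 * cm * dr \<le> 96 * 24 * dr * sm * cm"
    proof -
      have pc: "0 \<le> 12 * cm * dr" using cm dr by simp
      have "12 * cm * dr * 1 \<le> 12 * cm * dr * (192 * sm)" using sm by (intro mult_left_mono[OF _ pc]) auto
      thus ?thesis by (simp add: algebra_simps)
    qed
    show "0 \<le> q * \<delta>" using q \<delta> by simp
    show "0 < (96 * 24 * dr * sm * cm) * (12 * cm * dr)" using cm dr sm by simp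
  qed
  finally show ?thesis unfolding e3[unfolded Z_def, symmetric] .
qed




theorem mainTheorem8:
  fixes P :: "'a measure"
    and n d :: nat
    and \<pi> \<eta> :: "nat \<Rightarrow> nat"
    and M :: "nat \<Rightarrow> nat \<Rightarrow> real"
    and p h \<sigma> \<delta> \<mu> :: real
    and N :: "bool \<Rightarrow> nat \<Rightarrow> nat \<Rightarrow> 'a \<Rightarrow> nat"
    and W :: "bool \<Rightarrow> nat \<Rightarrow> nat \<Rightarrow> nat \<Rightarrow> 'a \<Rightarrow> real"
    and E Q :: "nat set"
    and G :: "nat \<Rightarrow> nat \<Rightarrow> bool"
    and ibar :: nat
  assumes prob: "prob_space P"
    and nd: "2 \<le> max n d"
    and pi_perm: "bij_betw \<pi> {..<n} {..<n}"
    and eta_perm: "bij_betw \<eta> {..<d} {..<d}"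
    and M_range: "\<forall>i<n. \<forall>j<d. 0 \<le> M i j \<and> M i j \<le> 1"
    and M_rows: "\<forall>i<n. \<forall>i'<n. \<forall>j<d. \<pi> i \<le> \<pi> i' \<longrightarrow> M i' j \<le> M i j"
    and M_cols: "\<forall>i<n. \<forall>j<d. \<forall>j'<d. \<eta> j \<le> \<eta> j' \<longrightarrow> M i j' \<le> M i j"
    and p_range: "0 \<le> p \<and> p \<le> 1"
    and h_range: "0 < h \<and> h \<le> 1"
    and sigma_pos: "0 < \<sigma>"
    and delta_range: "0 < \<delta> \<and> \<delta> < 1"
    and mu_pos: "0 < \<mu>"
    and N_meas: "\<forall>c i j. N c i j \<in> measurable P (count_space UNIV)"
    and N_pois: "\<forall>c. \<forall>i<n. \<forall>j<d.
        distr P (count_space UNIV) (N c i j) = measure_pmf (poisson_pmf \<mu>)"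
    and W_subg: "\<forall>c. \<forall>i<n. \<forall>j<d. \<forall>k. subGaussian P \<sigma> (W c i j k)"
    and indep: "prob_space.indep_vars P (\<lambda>_. borel)
        (\<lambda>x. case x of Inl (c, i, j) \<Rightarrow> (\<lambda>\<omega>. real (N c i j \<omega>))
                     | Inr (c, i, j, k) \<Rightarrow> W c i j k)
        ({Inl (c, i, j) | c i j. i < n \<and> j < d} \<union> {Inr (c, i, j, k) | c i j k. i < n \<and> j < d})"
    and E_sub: "E \<subseteq> {..<n}"
    and Q_sub: "Q \<subseteq> {..<d}"
    and Qstar_sub: "Qstar M d p h E \<subseteq> Q"
    and size: "lam1 \<mu> * real (min (card E) (card Q))
        \<ge> 4 * (rho \<sigma> (Lconst n d \<delta>))\<^sup>2 / h\<^sup>2"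
    and G_consistent: "\<forall>i\<in>E. \<forall>i'\<in>E. G i i' \<longrightarrow> \<pi> i < \<pi> i'"
    and ibar_E: "ibar \<in> E"
    and ibar_median: "card {i'\<in>E. \<pi> i' \<le> \<pi> ibar} = nat \<lceil>real (card E) / 2\<rceil>"
  shows "prob_space.prob P
     {\<omega> \<in> space P.
        let Gt = Gupd (\<lambda>i j. obs M (N True i j \<omega>) (\<lambda>k. W True i j k \<omega>) i j)
                      (\<lambda>i j. obs M (N False i j \<omega>) (\<lambda>k. W False i j k \<omega>) i j)
                      (rho \<sigma> (Lconst n d \<delta>)) (lam1 \<mu>)
                      (gam (Lconst n d \<delta>) (lam1 \<mu>)) E Q G
        in (\<forall>iO\<in>Oset Gt E. \<pi> iO < \<pi> ibar) \<and> (\<forall>iI\<in>Iset Gt E. \<pi> ibar < \<pi> iI)}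
   \<ge> 1 - real (card Q) * \<delta> /
        (12 * real_of_int \<lceil>log 2 (real (max n d))\<rceil> * real d)"
proof -
  have loc: "SL P n d \<sigma> \<mu> N W"
    unfolding SL_def SL_axioms_def Xv_def Idx_def using prob sigma_pos mu_pos N_meas N_pois W_subg indep by auto
  interpret S: SL P n d M \<sigma> \<mu> N W by (rule loc)
  define L where "L = Lconst n d \<delta>"
  define \<rho> where "\<rho> = rho \<sigma> L"
  define l1 where "l1 = lam1 \<mu>"
  define \<gamma> where "\<gamma> = gam L l1"
  define Gt where "Gt \<omega> = Gupd (\<lambda>i j. Yo M N W True i j \<omega>) (\<lambda>i j. Yo M N W False i j \<omega>) \<rho> l1 \<gamma> E Q G" for \<omega>
  define good where "good = {\<omega> \<in> space P. (\<forall>iO\<in>Oset (Gt \<omega>) E. \<pi> iO < \<pi> ibar) \<and> (\<forall>iI\<in>Iset (Gt \<omega>) E. \<pi> ibar < \<pi> iI)}"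
  have seteq: "{\<omega> \<in> space P.
        let Gt = Gupd (\<lambda>i j. obs M (N True i j \<omega>) (\<lambda>k. W True i j k \<omega>) i j)
                      (\<lambda>i j. obs M (N False i j \<omega>) (\<lambda>k. W False i j k \<omega>) i j)
                      (rho \<sigma> (Lconst n d \<delta>)) (lam1 \<mu>)
                      (gam (Lconst n d \<delta>) (lam1 \<mu>)) E Q G
        in (\<forall>iO\<in>Oset Gt E. \<pi> iO < \<pi> ibar) \<and> (\<forall>iI\<in>Iset Gt E. \<pi> ibar < \<pi> iI)} = good"
    unfolding good_def Gt_def L_def \<rho>_def l1_def \<gamma>_def Yo_def Let_def ..
  have finE: "finite E" using E_sub finite_subset by blast
  have finQ: "finite Q" using Q_sub finite_subset by blast
  have Gtp[measurable]: "\<And>i i'. Measurable.pred P (\<lambda>\<omega>. Gt \<omega> i i')"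
    unfolding Gt_def by (rule S.Gt_pred[OF finE E_sub Q_sub])
  have cardsum: "\<And>f. real (card {x\<in>E. f x}) = (\<Sum>x\<in>E. if f x then 1 else 0)"
    using finE by (simp add: sum.If_cases Int_def)
  have good_alt: "good = {\<omega>\<in>space P. (\<forall>iO\<in>E. real (card E) / 2 < (\<Sum>i'\<in>E. if Gt \<omega> iO i' then 1 else 0) \<longrightarrow> \<pi> iO < \<pi> ibar)
      \<and> (\<forall>iI\<in>E. real (card E) / 2 < (\<Sum>i'\<in>E. if Gt \<omega> i' iI then 1 else 0) \<longrightarrow> \<pi> ibar < \<pi> iI)}"
    unfolding good_def Oset_def Iset_def cardsum[symmetric] by auto
  have good_meas: "good \<in> sets P" unfolding good_alt using finE by measurable
  have det: "\<And>\<omega>. \<omega> \<in> space P \<Longrightarrow> (\<forall>i\<in>E. \<forall>i'\<in>E. Gt \<omega> i i' \<longrightarrow> \<pi> i < \<pi> i') \<Longrightarrow> \<omega> \<in> good"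
    unfolding good_def using det_good[OF finE ibar_E ibar_median] by blast
  have pmeas: "\<And>A. A \<in> sets P \<Longrightarrow> 0 \<le> measure P A" by simp
  show ?thesis unfolding seteq
  proof (cases "Q = {}")
    case True
    have cons: "\<And>\<omega>. \<forall>i\<in>E. \<forall>i'\<in>E. Gt \<omega> i i' \<longrightarrow> \<pi> i < \<pi> i'"
    proof (intro ballI impI)
      fix \<omega> i i' assume i: "i \<in> E" "i' \<in> E" and g: "Gt \<omega> i i'"
      show "\<pi> i < \<pi> i'"
      proof (cases "G i i'")
        case True thus ?thesis using G_consistent i by auto
      next
        case False
        then obtain Q' where Q': "Q' \<in> Qfam (\<lambda>i j. Yo M N W True i j \<omega>) \<rho> l1 \<gamma> E Q"
          and t: "(1 / real (card Q')) * (\<Sum>j\<in>Q'. Yo M N W False i j \<omega> - Yo M N W False i' j \<omega>) > 2 * \<rho> * sqrt (l1 / real (card Q'))"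
          using g unfolding Gt_def Gupd_def by auto
        have "Q' = {}" using Qfam_sub[OF Q'] True by auto
        thus ?thesis using t by simp
      qed
    qed
    have "good = space P" using det cons unfolding good_def by auto
    hence "measure P good = 1" by (simp add: S.prob_space)
    thus "1 - real (card Q) * \<delta> / (12 * real_of_int \<lceil>log 2 (real (max n d))\<rceil> * real d) \<le> measure P good"
      using True by simp
  next
    case False
    have d1: "1 \<le> d" using False Q_sub by (metis empty_subsetI lessThan_0 less_one not_less subset_antisym subset_eq linorder_not_le)
    have n1: "1 \<le> n" using ibar_E E_sub by (metis lessThan_iff less_one not_less subsetD less_nat_zero_code linorder_not_le)
    define nr where "nr = real n"
    define dr where "dr = real d"
    define sm where "sm = sqrt (real (max n d))"
    define cm where "cm = real_of_int \<lceil>log 2 (real (max n d))\<rceil>"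
    have nr1: "1 \<le> nr" using n1 unfolding nr_def by simp
    have dr1: "1 \<le> dr" using d1 unfolding dr_def by simp
    have mx: "2 \<le> real (max n d)" using nd by linarith
    have sm1: "1 \<le> sm" unfolding sm_def using mx by simp
    have lg: "1 \<le> log 2 (real (max n d))" using mx by (simp add: le_log_iff)
    have cm1: "1 \<le> cm"
    proof -
      have "(1::int) \<le> \<lceil>log 2 (real (max n d))\<rceil>" using lg by (simp add: le_ceiling_iff)
      thus ?thesis unfolding cm_def by simp
    qed
    have dpos: "0 < \<delta>" "\<delta> < 1" using delta_range by auto
    have Lval: "L = ln (24 * nr * dr * sm * cm / \<delta>)"
      unfolding L_def Lconst_def nr_def dr_def sm_def cm_def ..
    have Z24: "24 \<le> 24 * nr * dr * sm * cm / \<delta>"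
    proof -
      have p1: "1 * 1 \<le> nr * dr" using nr1 dr1 by (intro mult_mono) auto
      have p2: "1 * 1 \<le> (nr * dr) * sm" using p1 sm1 by (intro mult_mono) auto
      have p3: "1 * 1 \<le> ((nr * dr) * sm) * cm" using p2 cm1 by (intro mult_mono) auto
      have "24 * 1 \<le> 24 * (((nr * dr) * sm) * cm)" using p3 by (intro mult_left_mono) auto
      also have "\<dots> = 24 * (((nr * dr) * sm) * cm) / 1" by simp
      also have "\<dots> \<le> 24 * (((nr * dr) * sm) * cm) / \<delta>"
        by (rule divide_left_mono) (use dpos p3 in auto)
      finally show ?thesis by (simp add: mult.assoc)
    qed
    have L1: "1 \<le> L"
    proof -
      have "exp 1 \<le> 24 * nr * dr * sm * cm / \<delta>" using Z24 e_less_272 by linarith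
      thus ?thesis unfolding Lval using Z24 by (subst ln_ge_iff) auto
    qed
    have Lpos: "0 < L" using L1 by simp
    have rhoeq: "\<rho> = max 1 \<sigma> * exp 1 * sqrt (8 * L)" unfolding \<rho>_def rho_def ..
    have rho1: "1 \<le> \<rho>"
    proof -
      have a: "1 \<le> max 1 \<sigma>" by simp
      have b: "1 \<le> exp (1::real)" by simp
      have c: "1 \<le> sqrt (8 * L)" using L1 by simp
      have "1 * 1 * 1 \<le> max 1 \<sigma> * exp 1 * sqrt (8 * L)"
        using a b c by (intro mult_mono) auto
      thus ?thesis unfolding rhoeq by simp
    qed
    have l1eq: "l1 = 1 - exp (- \<mu>)" unfolding l1_def lam1_def ..
    have l1pos: "0 < l1" using mu_pos l1eq by simp
    have l1le: "l1 \<le> 1" using l1eq by simp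
    have gameq: "\<gamma> = 2 * L / (l1 * (exp 1)^2)" unfolding \<gamma>_def gam_def ..
    have injE: "inj_on \<pi> E" using pi_perm E_sub bij_betw_imp_inj_on inj_on_subset by blast
    define Pairs where "Pairs = {p \<in> E \<times> E. \<pi> (snd p) < \<pi> (fst p)}"
    define SS where "SS = {S. S \<subseteq> Q \<and> S \<noteq> {} \<and> \<gamma> \<le> real (card S)}"
    define Ap where "Ap p S = {\<omega>\<in>space P. 2 * \<rho> * sqrt (l1 * real (card S)) <
        (\<Sum>j\<in>S. Yo M N W False (fst p) j \<omega> - Yo M N W False (snd p) j \<omega>)}" for p S
    define R where "R \<omega> = restrict (\<lambda>x. Xv N W x \<omega>) (tagT n d)" for \<omega>
    define Bs where "Bs S = {\<omega>\<in>space P. R \<omega> \<in> CS M n d \<rho> l1 \<gamma> E Q S}" for S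
    define Bad where "Bad = (\<Union>p\<in>Pairs. \<Union>S\<in>SS. Ap p S \<inter> Bs S)"
    have finP: "finite Pairs" unfolding Pairs_def using finE by simp
    have finSS: "finite SS"
    proof (rule finite_subset)
      show "SS \<subseteq> Pow Q" unfolding SS_def by auto
      show "finite (Pow Q)" using finQ by simp
    qed
    have Bs_meas: "\<And>S. Bs S \<in> sets P"
    proof -
      fix S
      have "R -` CS M n d \<rho> l1 \<gamma> E Q S \<inter> space P \<in> sets P"
        unfolding R_def by (rule measurable_sets[OF S.restrict_meas CS_meas[OF finE finQ]])
      moreover have "R -` CS M n d \<rho> l1 \<gamma> E Q S \<inter> space P = Bs S" unfolding Bs_def by auto
      ultimately show "Bs S \<in> sets P" by simp
    qed
    have Ap_meas: "\<And>p S. p \<in> Pairs \<Longrightarrow> S \<in> SS \<Longrightarrow> Ap p S \<in> sets P"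
    proof -
      fix p S assume p: "p \<in> Pairs" and S: "S \<in> SS"
      have "fst p < n" "snd p < n" using p E_sub unfolding Pairs_def by auto
      moreover have "\<And>j. j \<in> S \<Longrightarrow> j < d" using S Q_sub unfolding SS_def by auto
      ultimately have "(\<lambda>\<omega>. \<Sum>j\<in>S. Yo M N W False (fst p) j \<omega> - Yo M N W False (snd p) j \<omega>) \<in> borel_measurable P"
        by (intro borel_measurable_sum borel_measurable_diff S.Yo_meas) auto
      thus "Ap p S \<in> sets P" unfolding Ap_def by measurable
    qed
    have Bad_meas: "Bad \<in> sets P" unfolding Bad_def
    proof (rule sets.finite_UN[OF finP])
      fix p assume p: "p \<in> Pairs"
      show "(\<Union>S\<in>SS. Ap p S \<inter> Bs S) \<in> sets P"
        using finSS Ap_meas[OF p] Bs_meas by (intro sets.finite_UN) auto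
    qed
    have sqK: "\<And>K. 0 < K \<Longrightarrow> sqrt (l1 / K) * K = sqrt (l1 * K)"
    proof -
      fix K :: real assume K: "0 < K"
      have "sqrt (l1 * K) = sqrt (l1 / K * K^2)" using K by (simp add: power2_eq_square)
      also have "\<dots> = sqrt (l1 / K) * sqrt (K^2)" by (rule real_sqrt_mult)
      also have "sqrt (K^2) = K" using K by simp
      finally show "sqrt (l1 / K) * K = sqrt (l1 * K)" by simp
    qed
    have cons: "\<And>\<omega>. \<omega> \<in> space P \<Longrightarrow> \<omega> \<notin> Bad \<Longrightarrow> \<forall>i\<in>E. \<forall>i'\<in>E. Gt \<omega> i i' \<longrightarrow> \<pi> i < \<pi> i'"
    proof (intro ballI impI)
      fix \<omega> i i' assume \<omega>: "\<omega> \<in> space P" and nb: "\<omega> \<notin> Bad" and i: "i \<in> E" "i' \<in> E" and g: "Gt \<omega> i i'"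
      show "\<pi> i < \<pi> i'"
      proof (cases "G i i'")
        case True thus ?thesis using G_consistent i by auto
      next
        case False
        then obtain Q' where Q': "Q' \<in> Qfam (\<lambda>i j. Yo M N W True i j \<omega>) \<rho> l1 \<gamma> E Q"
          and t: "(1 / real (card Q')) * (\<Sum>j\<in>Q'. Yo M N W False i j \<omega> - Yo M N W False i' j \<omega>) > 2 * \<rho> * sqrt (l1 / real (card Q'))"
          using g unfolding Gt_def Gupd_def by auto
        have Q'sub: "Q' \<subseteq> Q" by (rule Qfam_sub[OF Q'])
        have gQ': "\<gamma> \<le> real (card Q')" using Q' unfolding Qfam_iff by blast
        have Q'ne: "Q' \<noteq> {}" using t by auto
        have finQ': "finite Q'" using Q'sub finQ finite_subset by blast
        have Kp: "0 < real (card Q')" using Q'ne finQ' by (simp add: card_gt_0_iff)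
        show ?thesis
        proof (rule ccontr)
          assume nlt: "\<not> \<pi> i < \<pi> i'"
          show False
          proof (cases "i = i'")
            case True
            have "0 \<le> 2 * \<rho> * sqrt (l1 / real (card Q'))" using rho1 l1pos by simp
            thus False using t True by simp
          next
            case False
            hence "\<pi> i \<noteq> \<pi> i'" using injE i by (meson inj_on_eq_iff)
            hence pp: "(i, i') \<in> Pairs" using nlt i unfolding Pairs_def by auto
            have SQ': "Q' \<in> SS" unfolding SS_def using Q'sub Q'ne gQ' by auto
            have "2 * \<rho> * sqrt (l1 / real (card Q')) * real (card Q') < (\<Sum>j\<in>Q'. Yo M N W False i j \<omega> - Yo M N W False i' j \<omega>)"
              using t Kp by (simp add: field_simps)
            hence "\<omega> \<in> Ap (i, i') Q'" unfolding Ap_def using \<omega> sqK[OF Kp] by (simp add: mult.assoc)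
            moreover have "\<omega> \<in> Bs Q'" unfolding Bs_def R_def using \<omega> S.Bs_iff[OF \<omega> E_sub Q_sub] Q' by simp
            ultimately have "\<omega> \<in> Bad" unfolding Bad_def using pp SQ' by blast
            thus False using nb by simp
          qed
        qed
      qed
    qed
    have sub_good: "space P - Bad \<subseteq> good" using det cons by auto
    have "1 - measure P Bad = measure P (space P - Bad)" using Bad_meas by (simp add: S.prob_compl)
    also have "\<dots> \<le> measure P good" using sub_good good_meas by (rule S.finite_measure_mono)
    finally have g1: "1 - measure P Bad \<le> measure P good" .
    define q where "q = real (card Q)"
    have q1: "1 \<le> card Q" using False finQ by (simp add: Suc_le_eq card_gt_0_iff)
    have Ssub: "\<And>S. S \<in> SS \<Longrightarrow> S \<subseteq> Q" unfolding SS_def by auto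
    have step1: "measure P Bad \<le> (\<Sum>p\<in>Pairs. \<Sum>S\<in>SS. measure P (Ap p S \<inter> Bs S))"
    proof -
      have "measure P Bad \<le> (\<Sum>p\<in>Pairs. measure P (\<Union>S\<in>SS. Ap p S \<inter> Bs S))"
        unfolding Bad_def
      proof (rule S.finite_measure_subadditive_finite[OF finP])
        show "(\<lambda>p. \<Union>S\<in>SS. Ap p S \<inter> Bs S) ` Pairs \<subseteq> sets P"
          using finSS Ap_meas Bs_meas by (auto intro!: sets.finite_UN)
      qed
      also have "\<dots> \<le> (\<Sum>p\<in>Pairs. \<Sum>S\<in>SS. measure P (Ap p S \<inter> Bs S))"
      proof (rule sum_mono)
        fix p assume p: "p \<in> Pairs"
        show "measure P (\<Union>S\<in>SS. Ap p S \<inter> Bs S) \<le> (\<Sum>S\<in>SS. measure P (Ap p S \<inter> Bs S))"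
          using finSS Ap_meas[OF p] Bs_meas by (intro S.finite_measure_subadditive_finite) auto
      qed
      finally show ?thesis .
    qed
    have step2: "\<And>p S. p \<in> Pairs \<Longrightarrow> S \<in> SS \<Longrightarrow> measure P (Ap p S \<inter> Bs S) \<le> exp (- 3 * L) * measure P (Bs S)"
    proof -
      fix p S assume p: "p \<in> Pairs" and S: "S \<in> SS"
      obtain i i' where pe: "p = (i, i')" by (cases p)
      have iE: "i \<in> E" "i' \<in> E" and lt: "\<pi> i' < \<pi> i" using p pe unfolding Pairs_def by auto
      have ii: "i < n" "i' < n" "i \<noteq> i'" using iE E_sub lt by auto
      have Sd: "S \<subseteq> {..<d}" "S \<noteq> {}" using S Q_sub unfolding SS_def by auto
      have Mrow: "\<forall>j\<in>S. 0 \<le> M i j \<and> M i j \<le> M i' j \<and> M i' j \<le> 1"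
      proof
        fix j assume "j \<in> S"
        hence jd: "j < d" using Sd by auto
        show "0 \<le> M i j \<and> M i j \<le> M i' j \<and> M i' j \<le> 1"
          using M_range M_rows ii jd lt by auto
      qed
      have gS: "2 * L / (l1 * (exp 1)^2) \<le> real (card S)" using S gameq unfolding SS_def by auto
      have C: "CS M n d \<rho> l1 \<gamma> E Q S \<in> sets (PiM (tagT n d) (\<lambda>_. borel))" by (rule CS_meas[OF finE finQ])
      show "measure P (Ap p S \<inter> Bs S) \<le> exp (- 3 * L) * measure P (Bs S)"
        using S.test_bound[OF ii Sd Mrow Lpos rhoeq l1eq gS C]
        unfolding Ap_def Bs_def R_def pe by simp
    qed
    define cq where "cq = (\<Sum>S\<in>SS. measure P (Bs S))"
    have step3: "measure P Bad \<le> real (card Pairs) * exp (- 3 * L) * cq"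
    proof -
      have "(\<Sum>p\<in>Pairs. \<Sum>S\<in>SS. measure P (Ap p S \<inter> Bs S)) \<le> (\<Sum>p\<in>Pairs. \<Sum>S\<in>SS. exp (- 3 * L) * measure P (Bs S))"
        using step2 by (intro sum_mono) auto
      also have "\<dots> = real (card Pairs) * exp (- 3 * L) * cq"
        unfolding cq_def by (simp add: sum_distrib_left mult.assoc)
      finally show ?thesis using step1 by linarith
    qed
    define CQ where "CQ = real (1 + card Q + 2 * (card Q * nat (cmax \<rho> l1 E - 1)))"
    have cq0: "0 \<le> cq" unfolding cq_def by (simp add: sum_nonneg)
    have cq_CQ: "cq \<le> CQ"
    proof -
      have "cq \<le> (\<Sum>S\<in>Pow Q. measure P (Bs S))"
        unfolding cq_def using finQ by (intro sum_mono2) (auto simp: SS_def)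
      also have "\<dots> = (\<Sum>S\<in>Pow Q. \<integral>\<omega>. indicator (Bs S) \<omega> \<partial>P)"
      proof (rule sum.cong)
        fix S assume "S \<in> Pow Q"
        have "Bs S \<inter> space P = Bs S" unfolding Bs_def by auto
        thus "measure P (Bs S) = (\<integral>\<omega>. indicator (Bs S) \<omega> \<partial>P)" by simp
      qed simp
      also have "\<dots> = (\<integral>\<omega>. (\<Sum>S\<in>Pow Q. indicator (Bs S) \<omega>) \<partial>P)"
        by (rule Bochner_Integration.integral_sum[symmetric]) (auto intro!: integrable_real_indicator Bs_meas simp: S.emeasure_eq_measure)
      also have "\<dots> \<le> (\<integral>\<omega>. CQ \<partial>P)"
      proof (rule integral_mono)
        show "integrable P (\<lambda>\<omega>. \<Sum>S\<in>Pow Q. indicator (Bs S) \<omega> :: real)"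
          using Bs_meas by (intro Bochner_Integration.integrable_sum) (auto intro!: integrable_real_indicator simp: S.emeasure_eq_measure)
        show "integrable P (\<lambda>\<omega>. CQ)" by simp
        fix \<omega> assume \<omega>: "\<omega> \<in> space P"
        have "(\<Sum>S\<in>Pow Q. indicator (Bs S) \<omega> :: real) = real (card {S\<in>Pow Q. \<omega> \<in> Bs S})"
          using finQ by (simp add: indicator_def sum.If_cases Int_def)
        also have "card {S\<in>Pow Q. \<omega> \<in> Bs S} \<le> card (Qfam (\<lambda>i j. Yo M N W True i j \<omega>) \<rho> l1 \<gamma> E Q)"
        proof (rule card_mono)
          show "finite (Qfam (\<lambda>i j. Yo M N W True i j \<omega>) \<rho> l1 \<gamma> E Q)"
          proof (rule finite_subset)
            show "Qfam (\<lambda>i j. Yo M N W True i j \<omega>) \<rho> l1 \<gamma> E Q \<subseteq> Pow Q" using Qfam_sub by blast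
            show "finite (Pow Q)" using finQ by simp
          qed
          show "{S\<in>Pow Q. \<omega> \<in> Bs S} \<subseteq> Qfam (\<lambda>i j. Yo M N W True i j \<omega>) \<rho> l1 \<gamma> E Q"
            using S.Bs_iff[OF \<omega> E_sub Q_sub] unfolding Bs_def R_def by auto
        qed
        also have "\<dots> \<le> 1 + card Q + 2 * (card Q * nat (cmax \<rho> l1 E - 1))" by (rule Qfam_card[OF finQ])
        finally show "(\<Sum>S\<in>Pow Q. indicator (Bs S) \<omega>) \<le> CQ" unfolding CQ_def by simp
      qed
      also have "\<dots> = CQ" by (simp add: S.prob_space)
      finally show ?thesis .
    qed
    have CQ_le: "CQ \<le> 6 * nr * q"
    proof -
      have cE: "card E \<le> n" using card_mono[OF _ E_sub] by simp
      have "E \<noteq> {}" using ibar_E by auto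
      hence cE1: "1 \<le> card E" using finE by (simp add: Suc_le_eq card_gt_0_iff)
      have sq: "sqrt (l1 * real (card E)) \<le> real n"
      proof -
        have "l1 * real (card E) \<le> real (card E) * real (card E)"
          using l1le cE1 by (intro mult_mono) auto
        hence "sqrt (l1 * real (card E)) \<le> sqrt (real (card E) * real (card E))" by (rule real_sqrt_le_mono)
        also have "\<dots> = real (card E)" by simp
        finally show ?thesis using cE by linarith
      qed
      have dv: "sqrt (l1 * real (card E)) / (2 * \<rho>) \<le> real n"
      proof -
        have "sqrt (l1 * real (card E)) / (2 * \<rho>) \<le> sqrt (l1 * real (card E)) / 1"
          using rho1 l1pos by (intro divide_left_mono) auto
        thus ?thesis using sq by simp
      qed
      have "cmax \<rho> l1 E \<le> int n + 1" unfolding cmax_def using dv by (simp add: ceiling_le_iff)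
      hence k: "nat (cmax \<rho> l1 E - 1) \<le> n" by simp
      have a: "card Q * nat (cmax \<rho> l1 E - 1) \<le> card Q * n" using k by simp
      have b: "card Q \<le> card Q * n" using n1 by simp
      have "1 + card Q + 2 * (card Q * nat (cmax \<rho> l1 E - 1)) \<le> 6 * n * card Q"
      proof -
        have e6: "6 * n * card Q = 6 * (card Q * n)" by simp
        show ?thesis unfolding e6 using a b q1 by linarith
      qed
      hence "real (1 + card Q + 2 * (card Q * nat (cmax \<rho> l1 E - 1))) \<le> real (6 * n * card Q)" by (rule of_nat_mono)
      thus ?thesis unfolding CQ_def nr_def q_def by simp
    qed
    have np: "real (card Pairs) \<le> nr^2"
    proof -
      have cEn: "card E \<le> n" using card_mono[OF _ E_sub] by simp
      have "card Pairs \<le> card (E \<times> E)" unfolding Pairs_def using finE by (intro card_mono) auto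
      also have "\<dots> = card E * card E" by (simp add: card_cartesian_product)
      also have "\<dots> \<le> n * n" using cEn by (intro mult_le_mono) auto
      finally have "card Pairs \<le> n * n" .
      hence "real (card Pairs) \<le> real (n * n)" by (rule of_nat_mono)
      thus ?thesis unfolding nr_def by (simp add: power2_eq_square)
    qed
    have fa: "real (card Pairs) * exp (- 3 * ln (24 * nr * dr * sm * cm / \<delta>)) * cq \<le> q * \<delta> / (12 * cm * dr)"
      by (rule final_arith[OF nr1 dr1 cm1 sm1 dpos(1) dpos(2) _ np cq0]) (use cq_CQ CQ_le q_def in auto)
    have "measure P Bad \<le> q * \<delta> / (12 * cm * dr)" using step3 fa unfolding Lval by linarith
    thus "1 - real (card Q) * \<delta> / (12 * real_of_int \<lceil>log 2 (real (max n d))\<rceil> * real d) \<le> measure P good"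
      using g1 unfolding q_def cm_def dr_def by linarith
  qed
qed


end
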